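(* Consider the setting: $\mathcal{S}$ a state space, $\mathcal{A}$ a finite action space, $\rho$ a distribution on $\mathcal{S}$, $\pi_{\mathrm{ref}}$ a full-support policy, $\beta>0$, $R>0$, ground-truth reward $r^*:\mathcal{S}\times\mathcal{A}\to[0,R]$, and a finite policy class $\Pi$ with (I) $\pi^*_{r^*}\in\Pi$ and (II) $|\log(\pi(a|s)/\pi_{\mathrm{ref}}(a|s))|\le R/\beta$ for all $\pi\in\Pi$ and $(s,a)$. Suppose a sequentially generated dataset $\{(s^t,a^t,\tilde a^t,y^t,\pi^t)\}_{t=1}^T$ has policies $\pi^1,\dots,\pi^T\in\mathrm{conv}(\Pi)$ produced by a no-regret online learning algorithm with $\sum_{t=1}^T[J_\beta(\pi^*_{r^*})-J_\beta(\pi^t)]=\tilde O(\mathcal{C}(\Pi)\sqrt T)$ for some structural complexity measure $\mathcal{C}(\Pi)$. Then, as long as $T=\tilde\Omega\big(\beta^{-2}\mathcal{C}(\Pi)^2\kappa^2(e^{2R/\beta})\big)$, running RPO (with $\mathrm{conv}(\Pi)$, $\mathcal{R}^\Pi$, the dataset, and an appropriately chosen parameter $\eta$) yields a policy $\pi_{\mathrm{Dstl}}$ with $$J_\beta(\pi^*_{r^*})-J_\beta(\pi_{\mathrm{Dstl}})=\tilde O\big(e^{2R}T^{-1/2}\big),$$ where $\kappa(x)=\frac{(x-1)^2}{x-1-\log x}$, and $\tilde O,\tilde\Omega$ hide absolute constants and polylogarithmic factors (in $|\Pi|$, $T$ and the confidence level).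
   Context: Definitions: $\pi^*_r(a|s)\propto\pi_{\mathrm{ref}}(a|s)e^{r(s,a)/\beta}$; $J_\beta(\pi):=\mathbb{E}_{s\sim\rho}[\mathbb{E}_{a\sim\pi(\cdot|s)}r^*(s,a)-\beta\mathrm{KL}(\pi(\cdot|s)\|\pi_{\mathrm{ref}}(\cdot|s))]$; $\mathrm{KL}(\pi\|\pi_{\mathrm{ref}}):=\mathbb{E}_{s\sim\rho}\mathrm{KL}(\pi(\cdot|s)\|\pi_{\mathrm{ref}}(\cdot|s))$; $\mathrm{conv}(\Pi)$ is the set of finite pointwise convex combinations of policies in $\Pi$. Bradley–Terry preferences: $\mathbb{P}_r(y=1|s,a,\tilde a)=\sigma(r(s,a)-r(s,\tilde a))$, $\sigma(x)=1/(1+e^{-x})$. A dataset $\{(s^i,a^i,\tilde a^i,y^i,\pi^i)\}_i$ is sequentially generated if each $\pi^i$ is chosen as a function of previous tuples only, then $s^i\sim\rho$, $a^i\sim\pi^i(\cdot|s^i)$, $\tilde a^i\sim\pi_{\mathrm{ref}}(\cdot|s^i)$, $y^i\sim\mathbb{P}_{r^*}(\cdot|s^i,a^i,\tilde a^i)$. $\mathcal{R}^\Pi:=\{r_\pi:\pi\in\Pi\}$, $r_\pi(s,a):=\mathrm{Clip}_{[0,R]}[\beta\log\frac{\pi(a|s)}{\pi_{\mathrm{ref}}(a|s)}-\min_{a'}\beta\log\frac{\pi(a'|s)}{\pi_{\mathrm{ref}}(a'|s)}]$. $L_{\mathcal{D}}(r):=\frac1{|\mathcal{D}|}\sum_i[-y^i\log\sigma(r(s^i,a^i)-r(s^i,\tilde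 a^i))-(1-y^i)\log\sigma(r(s^i,\tilde a^i)-r(s^i,a^i))]$. RPO$(\tilde\Pi,\mathcal{R},\mathcal{D},\eta)$ returns $(\pi_{\mathrm{Dstl}},\hat r_{\mathrm{Dstl}})$ solving $\max_{\pi\in\tilde\Pi}\min_{r\in\mathcal{R}}\{\mathbb{E}_{s\sim\rho,a\sim\pi,\tilde a\sim\pi_{\mathrm{ref}}}[r(s,a)-r(s,\tilde a)]-\beta\mathrm{KL}(\pi\|\pi_{\mathrm{ref}})+\eta^{-1}L_{\mathcal{D}}(r)\}$. *)

theory Defs
  imports "HOL-Probability.Probability"
begin

definition is_policy :: "'a set \<Rightarrow> ('s \<Rightarrow> 'a \<Rightarrow> real) \<Rightarrow> bool" where
  "is_policy A p \<longleftrightarrow> (\<forall>s. (\<forall>a. 0 \<le> p s a) \<and> (\<forall>a. a \<notin> A \<longrightarrow> p s a = 0) \<and> (\<Sum>a\<in>A. p s a) = 1)"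

definition pi_star :: "'a set \<Rightarrow> ('s \<Rightarrow> 'a \<Rightarrow> real) \<Rightarrow> real \<Rightarrow> ('s \<Rightarrow> 'a \<Rightarrow> real) \<Rightarrow> 's \<Rightarrow> 'a \<Rightarrow> real" where
  "pi_star A pref \<beta> r s a =
     (if a \<in> A then pref s a * exp (r s a / \<beta>) / (\<Sum>b\<in>A. pref s b * exp (r s b / \<beta>)) else 0)"

definition KL_s :: "'a set \<Rightarrow> ('s \<Rightarrow> 'a \<Rightarrow> real) \<Rightarrow> ('s \<Rightarrow> 'a \<Rightarrow> real) \<Rightarrow> 's \<Rightarrow> real" where
  "KL_s A p pref s = (\<Sum>a\<in>A. if p s a = 0 then 0 else p s a * ln (p s a / pref s a))"

definition KL_pol :: "'s pmf \<Rightarrow> 'a set \<Rightarrow> ('s \<Rightarrow> 'a \<Rightarrow> real) \<Rightarrow> ('s \<Rightarrow> 'a \<Rightarrow> real) \<Rightarrow> real" where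
  "KL_pol \<rho> A p pref = measure_pmf.expectation \<rho> (\<lambda>s. KL_s A p pref s)"

definition J_beta :: "'s pmf \<Rightarrow> 'a set \<Rightarrow> ('s \<Rightarrow> 'a \<Rightarrow> real) \<Rightarrow> real \<Rightarrow> ('s \<Rightarrow> 'a \<Rightarrow> real)
    \<Rightarrow> ('s \<Rightarrow> 'a \<Rightarrow> real) \<Rightarrow> real" where
  "J_beta \<rho> A pref \<beta> r p =
     measure_pmf.expectation \<rho> (\<lambda>s. (\<Sum>a\<in>A. p s a * r s a) - \<beta> * KL_s A p pref s)"

definition conv_pol :: "('s \<Rightarrow> 'a \<Rightarrow> real) set \<Rightarrow> ('s \<Rightarrow> 'a \<Rightarrow> real) set" where
  "conv_pol P = {p. \<exists>F w. finite F \<and> F \<subseteq> P \<and> (\<forall>q\<in>F. 0 \<le> w q) \<and> (\<Sum>q\<in>F. w q) = 1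
                       \<and> p = (\<lambda>s a. \<Sum>q\<in>F. w q * q s a)}"

definition reward_of :: "'a set \<Rightarrow> ('s \<Rightarrow> 'a \<Rightarrow> real) \<Rightarrow> real \<Rightarrow> real \<Rightarrow> ('s \<Rightarrow> 'a \<Rightarrow> real) \<Rightarrow> 's \<Rightarrow> 'a \<Rightarrow> real" where
  "reward_of A pref \<beta> R p s a =
     max 0 (min R (\<beta> * ln (p s a / pref s a) - Min ((\<lambda>a'. \<beta> * ln (p s a' / pref s a')) ` A)))"

definition reward_class :: "'a set \<Rightarrow> ('s \<Rightarrow> 'a \<Rightarrow> real) \<Rightarrow> real \<Rightarrow> real \<Rightarrow> ('s \<Rightarrow> 'a \<Rightarrow> real) set
    \<Rightarrow> ('s \<Rightarrow> 'a \<Rightarrow> real) set" where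
  "reward_class A pref \<beta> R P = reward_of A pref \<beta> R ` P"

definition sigmoid :: "real \<Rightarrow> real" where
  "sigmoid x = 1 / (1 + exp (- x))"

text \<open>Data points (s, a, a~, y); y = True means y = 1 (a preferred to a~).\<close>
definition bt_loss :: "('s \<Rightarrow> 'a \<Rightarrow> real) \<Rightarrow> 's \<times> 'a \<times> 'a \<times> bool \<Rightarrow> real" where
  "bt_loss r d = (case d of (s, a, a', y) \<Rightarrow>
      (if y then - ln (sigmoid (r s a - r s a')) else - ln (sigmoid (r s a' - r s a))))"

definition L_D :: "('s \<times> 'a \<times> 'a \<times> bool) list \<Rightarrow> ('s \<Rightarrow> 'a \<Rightarrow> real) \<Rightarrow> real" where
  "L_D D r = (1 / real (length D)) * (\<Sum>i<length D. bt_loss r (D ! i))"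

definition rpo_obj :: "'s pmf \<Rightarrow> 'a set \<Rightarrow> ('s \<Rightarrow> 'a \<Rightarrow> real) \<Rightarrow> real \<Rightarrow> real
    \<Rightarrow> ('s \<times> 'a \<times> 'a \<times> bool) list \<Rightarrow> ('s \<Rightarrow> 'a \<Rightarrow> real) \<Rightarrow> ('s \<Rightarrow> 'a \<Rightarrow> real) \<Rightarrow> real" where
  "rpo_obj \<rho> A pref \<beta> \<eta> D p r =
     measure_pmf.expectation \<rho> (\<lambda>s. (\<Sum>a\<in>A. p s a * r s a) - (\<Sum>a\<in>A. pref s a * r s a))
     - \<beta> * KL_pol \<rho> A p pref + L_D D r / \<eta>"

definition RPO_solutions :: "'s pmf \<Rightarrow> 'a set \<Rightarrow> ('s \<Rightarrow> 'a \<Rightarrow> real) \<Rightarrow> real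
    \<Rightarrow> ('s \<Rightarrow> 'a \<Rightarrow> real) set \<Rightarrow> ('s \<Rightarrow> 'a \<Rightarrow> real) set
    \<Rightarrow> ('s \<times> 'a \<times> 'a \<times> bool) list \<Rightarrow> real \<Rightarrow> ('s \<Rightarrow> 'a \<Rightarrow> real) set" where
  "RPO_solutions \<rho> A pref \<beta> PT Rs D \<eta> =
     {p \<in> PT. \<forall>q\<in>PT. (INF r\<in>Rs. rpo_obj \<rho> A pref \<beta> \<eta> D q r) \<le> (INF r\<in>Rs. rpo_obj \<rho> A pref \<beta> \<eta> D p r)}"

definition pol_pmf :: "('s \<Rightarrow> 'a \<Rightarrow> real) \<Rightarrow> 's \<Rightarrow> 'a pmf" where
  "pol_pmf p s = embed_pmf (\<lambda>a. p s a)"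

text \<open>Sequential data generation: the policy for round i+1 is alg applied to the
  first i data points (the policies pi^j are determined by earlier tuples).\<close>
primrec gen_data :: "'s pmf \<Rightarrow> (('s \<times> 'a \<times> 'a \<times> bool) list \<Rightarrow> ('s \<Rightarrow> 'a \<Rightarrow> real))
    \<Rightarrow> ('s \<Rightarrow> 'a \<Rightarrow> real) \<Rightarrow> ('s \<Rightarrow> 'a \<Rightarrow> real) \<Rightarrow> nat \<Rightarrow> ('s \<times> 'a \<times> 'a \<times> bool) list pmf" where
  "gen_data \<rho> alg pref r 0 = return_pmf []"
| "gen_data \<rho> alg pref r (Suc n) =
     bind_pmf (gen_data \<rho> alg pref r n) (\<lambda>h.
     bind_pmf \<rho> (\<lambda>s.
     bind_pmf (pol_pmf (alg h) s) (\<lambda>a.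
     bind_pmf (pol_pmf pref s) (\<lambda>a'.
     map_pmf (\<lambda>y. h @ [(s, a, a', y)]) (bernoulli_pmf (sigmoid (r s a - r s a')))))))"

definition regret :: "'s pmf \<Rightarrow> 'a set \<Rightarrow> ('s \<Rightarrow> 'a \<Rightarrow> real) \<Rightarrow> real \<Rightarrow> ('s \<Rightarrow> 'a \<Rightarrow> real)
    \<Rightarrow> (('s \<times> 'a \<times> 'a \<times> bool) list \<Rightarrow> ('s \<Rightarrow> 'a \<Rightarrow> real)) \<Rightarrow> ('s \<times> 'a \<times> 'a \<times> bool) list \<Rightarrow> real" where
  "regret \<rho> A pref \<beta> r alg h =
     (\<Sum>t<length h. J_beta \<rho> A pref \<beta> r (pi_star A pref \<beta> r) - J_beta \<rho> A pref \<beta> r (alg (take t h)))"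

definition kappa :: "real \<Rightarrow> real" where
  "kappa x = (x - 1)^2 / (x - 1 - ln x)"

text \<open>Base of the hidden polylogarithmic factors (in |Pi|, T, 1/delta); always \<ge> 1.\<close>
definition polylog_base :: "nat \<Rightarrow> nat \<Rightarrow> real \<Rightarrow> real" where
  "polylog_base N T \<delta> = ln (exp 1 * real N * real T / \<delta>)"

end

theory Submission
  imports Defs
begin

lemma integral_bind_pmf_bdd:
  fixes f :: "'b \<Rightarrow> real"
  assumes "\<And>x. \<bar>f x\<bar> \<le> B"
  shows "measure_pmf.expectation (bind_pmf M N) f = measure_pmf.expectation M (\<lambda>x. measure_pmf.expectation (N x) f)"
  using measurable_measure_pmf[of N] unfolding measure_pmf_bind
  apply (subst integral_bind[where K="count_space UNIV" and B=B and B'=1])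
  using assms apply (auto simp: prob_space.emeasure_space_1 prob_space_measure_pmf prob_space.finite_measure[OF prob_space_measure_pmf])
  done

lemma int_bdd: fixes f :: "'b \<Rightarrow> real"
  assumes "\<And>s. \<bar>f s\<bar> \<le> B" shows "integrable (measure_pmf \<rho>) f"
  by (intro measure_pmf.integrable_const_bound[where B=B]) (auto simp: assms)

lemma sigmoid_pos: "0 < sigmoid x" by (simp add: sigmoid_def add_pos_pos)
lemma sigmoid_lt1: "sigmoid x < 1"
proof -
  have "1 < 1 + exp (-x)" by simp
  moreover have "0 < 1 + exp (-x)" by (smt (verit) exp_gt_zero)
  ultimately show ?thesis by (simp add: sigmoid_def divide_less_eq)
qed
lemma sigmoid_neg: "sigmoid (-x) = 1 - sigmoid x"
proof -
  have "1 + exp x \<noteq> 0" by (smt (verit) exp_gt_zero)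
  then show ?thesis by (simp add: sigmoid_def exp_minus add_divide_distrib[symmetric] field_simps)
qed

lemma sigmoid_deriv: "(sigmoid has_real_derivative (exp (-x) / (1 + exp (-x))^2)) (at x)"
proof -
  have "1 + exp (-x) \<noteq> 0" by (smt (verit) exp_gt_zero)
  then show ?thesis unfolding sigmoid_def
    by (auto intro!: derivative_eq_intros simp: power2_eq_square)
qed

lemma w_bound: fixes w :: real assumes "0 < w" shows "min w (1/w) / 4 \<le> w / (1 + w)^2"
proof (cases "w \<le> 1")
  case True
  have "(1+w)*(1+w) \<le> 2*2" using True assms by (intro mult_mono) auto
  then have "(1+w)^2 \<le> 4" by (simp add: power2_eq_square)
  then have "w/4 \<le> w/(1+w)^2" using assms by (intro divide_left_mono) auto
  then show ?thesis using True assms by (simp add: min_def)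
next
  case False
  have "(1+w)*(1+w) \<le> (2*w)*(2*w)" using False by (intro mult_mono) auto
  then have "(1+w)^2 \<le> 4*w^2" by (simp add: power2_eq_square)
  then have "1/(4*w) \<le> w/(1+w)^2" using assms False
    by (simp add: field_simps power2_eq_square)
  moreover have "1 \<le> w*w" using False mult_mono[of 1 w 1 w] by auto
  then have "1/w \<le> w" using False by (simp add: field_simps)
  ultimately show ?thesis using False assms by (simp add: min_def field_simps)
qed

lemma sigmoid_diff_lb:
  assumes "\<bar>x\<bar> \<le> R" "\<bar>y\<bar> \<le> R"
  shows "exp (-R) / 4 * \<bar>x - y\<bar> \<le> \<bar>sigmoid x - sigmoid y\<bar>"
proof -
  have key: "exp (-R)/4 * (b - a) \<le> sigmoid b - sigmoid a" if "a < b" "\<bar>a\<bar> \<le> R" "\<bar>b\<bar> \<le> R" for a b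
  proof -
    obtain z where z: "a < z" "z < b" "sigmoid b - sigmoid a = (b - a) * (exp (-z) / (1 + exp (-z))^2)"
      using MVT2[OF \<open>a<b\<close>, of sigmoid "\<lambda>x. exp (-x) / (1 + exp (-x))^2"] sigmoid_deriv by blast
    have zr: "\<bar>z\<bar> \<le> R" using z that by auto
    have "1/exp(-z) = exp z" by (simp add: exp_minus field_simps)
    moreover have "exp (-R) \<le> exp (-z)" "exp (-R) \<le> exp z" using zr by auto
    ultimately have "min (exp (-z)) (1/exp (-z)) \<ge> exp (-R)" by (simp add: min_def)
    then have "exp (-R)/4 \<le> min (exp (-z)) (1/exp (-z)) / 4" by simp
    also have "\<dots> \<le> exp (-z) / (1 + exp (-z))^2"
      by (rule w_bound) simp
    finally have "exp (-R)/4 \<le> exp (-z) / (1 + exp (-z))^2" .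
    then have "exp (-R)/4 * (b - a) \<le> exp (-z) / (1 + exp (-z))^2 * (b-a)"
      using that by (intro mult_right_mono) auto
    then show ?thesis using z(3) by (simp add: mult.commute)
  qed
  show ?thesis
  proof (cases x y rule: linorder_cases)
    case less
    have "exp (-R)/4 * (y - x) \<le> sigmoid y - sigmoid x" using key[of x y] assms less by simp
    moreover have "\<bar>x - y\<bar> = y - x" using less by simp
    moreover have "sigmoid y - sigmoid x \<le> \<bar>sigmoid x - sigmoid y\<bar>" by linarith
    ultimately show ?thesis by (metis order_trans)
  next
    case equal then show ?thesis by simp
  next
    case greater
    have "exp (-R)/4 * (x - y) \<le> sigmoid x - sigmoid y" using key[of y x] assms greater by simp
    moreover have "\<bar>x - y\<bar> = x - y" using greater by simp
    moreover have "sigmoid x - sigmoid y \<le> \<bar>sigmoid x - sigmoid y\<bar>" by linarith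
    ultimately show ?thesis by (metis order_trans)
  qed
qed

lemma bc_bound:
  assumes "0 \<le> p" "p \<le> 1" "0 \<le> q" "q \<le> 1"
  shows "(p - q)^2 / 4 \<le> 1 - sqrt p * sqrt q - sqrt (1-p) * sqrt (1-q)"
proof -
  define u v u2 v2 where "u = sqrt p" "v = sqrt q" "u2 = sqrt (1-p)" "v2 = sqrt (1-q)"
  have uu: "u^2 = p" "v^2 = q" "u2^2 = 1-p" "v2^2 = 1-q" using assms by (auto simp: u_v_u2_v2_def)
  have nn: "0 \<le> u" "0 \<le> v" "0 \<le> u2" "0 \<le> v2" using assms by (auto simp: u_v_u2_v2_def)
  have "u \<le> 1" "v \<le> 1" "u2 \<le> 1" "v2 \<le> 1" using assms by (auto simp: u_v_u2_v2_def)
  then have le2: "u + v \<le> 2" "u2 + v2 \<le> 2" by auto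
  have e: "1 - u * v - u2 * v2 = (u-v)^2/2 + (u2-v2)^2/2"
    using uu by (simp add: power2_diff field_simps)
  have "(p-q)^2 = (u-v)^2 * (u+v)^2" using uu by (simp add: power2_eq_square algebra_simps)
  also have "\<dots> \<le> (u-v)^2 * 4" using le2 nn mult_mono[of "u+v" 2 "u+v" 2] mult_mono[of "u2+v2" 2 "u2+v2" 2] by (intro mult_left_mono) (auto simp: power2_eq_square)
  finally have 1: "(p-q)^2 \<le> (u-v)^2 * 4" .
  have d2: "p - q = (v2-u2)*(u2+v2)" using uu by (simp add: algebra_simps power2_eq_square)
  have "(p-q)^2 = (u2-v2)^2 * (u2+v2)^2" unfolding d2 by (simp add: power_mult_distrib power2_commute)
  also have "\<dots> \<le> (u2-v2)^2 * 4" using le2 nn mult_mono[of "u+v" 2 "u+v" 2] mult_mono[of "u2+v2" 2 "u2+v2" 2] by (intro mult_left_mono) (auto simp: power2_eq_square)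
  finally have 2: "(p-q)^2 \<le> (u2-v2)^2 * 4" .
  show ?thesis using e 1 2 assms by (simp add: u_v_u2_v2_def[symmetric])
qed

lemma amgm: fixes x t l :: real assumes "0 < l" shows "x * t \<le> l/2 * x^2 + t^2/(2*l)"
proof -
  have "0 \<le> (l*x - t)^2" by simp
  then have "2*l*(x*t) \<le> l^2*x^2 + t^2" by (simp add: power2_eq_square algebra_simps)
  then have "x*t \<le> (l^2*x^2 + t^2)/(2*l)" using assms by (simp add: field_simps)
  also have "\<dots> = l/2 * x^2 + t^2/(2*l)" using assms by (simp add: field_simps power2_eq_square)
  finally show ?thesis .
qed

lemma sqrt_ln_bound: assumes "0 < u" shows "ln u \<le> 2 * sqrt u - 2"
proof -
  have "ln (sqrt u) \<le> sqrt u - 1" using assms by (intro ln_le_minus_one) simp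
  moreover have "ln (sqrt u) = ln u / 2" using assms by (simp add: ln_sqrt)
  ultimately show ?thesis by simp
qed

lemma u_bound: fixes u :: real assumes "0 < u" "u \<le> 16" shows "(u-1)^2 \<le> 25 * (u - 1 - ln u)"
proof -
  define w where "w = sqrt u"
  have "sqrt u \<le> sqrt (4^2)" using assms by (intro real_sqrt_le_mono) simp
  then have "sqrt u \<le> 4" by simp
  then have w: "w^2 = u" "0 \<le> w" "w \<le> 4" using assms by (auto simp: w_def)
  have "ln u \<le> 2*w - 2" using sqrt_ln_bound[OF assms(1)] by (simp add: w_def)
  then have 1: "(w - 1)^2 \<le> u - 1 - ln u" using w by (simp add: power2_diff)
  have "(u-1)^2 = (w-1)^2 * (w+1)^2" using w(1) by (simp flip: power_mult_distrib add: algebra_simps power2_eq_square)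
  also have "\<dots> \<le> (w-1)^2 * 25"
  proof (intro mult_left_mono)
    have "(w+1)*(w+1) \<le> 5*5" using w by (intro mult_mono) auto
    then show "(w+1)^2 \<le> 25" by (simp add: power2_eq_square)
  qed simp
  moreover have "(w-1)^2 * 25 \<le> (u - 1 - ln u) * 25" using 1 by simp
  ultimately show ?thesis by linarith
qed

definition psi :: "real \<Rightarrow> real \<Rightarrow> real" where
  "psi p m = (if p = 0 then 0 else p * ln (p / m)) - p + m"

lemma psi_ge: assumes "0 \<le> p" "0 < m" shows "(sqrt m - sqrt p)^2 \<le> psi p m"
proof (cases "p = 0")
  case True then show ?thesis using assms by (simp add: psi_def)
next
  case False
  then have p: "0 < p" using assms by simp
  have "ln (m/p) \<le> 2 * sqrt (m/p) - 2" using p assms by (intro sqrt_ln_bound) simp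
  moreover have "ln (p/m) = - ln (m/p)" using p assms by (simp add: ln_div)
  ultimately have "ln (p/m) \<ge> 2 - 2 * sqrt (m/p)" by simp
  then have "p * ln (p/m) \<ge> p * (2 - 2 * sqrt (m/p))" using p by (intro mult_left_mono) auto
  moreover have "p * sqrt (m/p) = sqrt p * sqrt m"
  proof -
    have "p = sqrt p * sqrt p" using p by simp
    then show ?thesis using p assms by (metis real_sqrt_divide real_sqrt_gt_zero times_divide_eq_left nonzero_mult_div_cancel_left
          mult.commute less_irrefl)
  qed
  ultimately have "p * ln (p/m) \<ge> 2*p - 2 * (sqrt p * sqrt m)" by (simp add: algebra_simps)
  moreover have "(sqrt m - sqrt p)^2 = m + p - 2 * (sqrt p * sqrt m)" using p assms
    by (simp add: power2_diff algebra_simps)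
  ultimately show ?thesis using False by (simp add: psi_def)
qed

lemma psi_nonneg: "0 \<le> p \<Longrightarrow> 0 < m \<Longrightarrow> 0 \<le> psi p m"
  using psi_ge[of p m] by (smt (verit) zero_le_power2)

lemma psi_S: assumes "0 < p" "0 < m" "m \<le> 16 * p" shows "m^2 / p \<le> 25 * psi p m + 2 * m"
proof -
  define X where "X = m / p"
  have X: "0 < X" "X \<le> 16" using assms by (auto simp: X_def field_simps)
  have "(X - 1)^2 \<le> 25 * (X - 1 - ln X)" by (rule u_bound[OF X])
  then have "p * (X-1)^2 \<le> p * (25 * (X - 1 - ln X))" using assms by (intro mult_left_mono) auto
  moreover have "p * (X-1)^2 = m^2/p - 2*m + p" using assms by (simp add: X_def field_simps power2_eq_square)
  moreover have "p * (X - 1 - ln X) = psi p m"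
    using assms by (simp add: X_def psi_def ln_div field_simps)
  moreover have "p * (25 * (X - 1 - ln X)) = 25 * (p * (X - 1 - ln X))" by simp
  ultimately show ?thesis using assms by linarith
qed

lemma psi_Z: assumes "0 \<le> p" "0 < m" "\<not> (0 < p \<and> m \<le> 16 * p)" shows "m \<le> 2 * psi p m"
proof (cases "p = 0")
  case True then show ?thesis using assms by (simp add: psi_def)
next
  case False
  then have "16 * p < m" using assms by auto
  then have "sqrt (16 * p) < sqrt m" by simp
  then have "4 * sqrt p < sqrt m" by (simp add: real_sqrt_mult)
  then have "3/4 * sqrt m \<le> sqrt m - sqrt p" by simp
  then have "(3/4 * sqrt m)^2 \<le> (sqrt m - sqrt p)^2" using assms by (intro power_mono) auto
  moreover have "(3/4 * sqrt m)^2 = (3/4)^2 * (sqrt m)^2" by (rule power_mult_distrib)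
  moreover have "(sqrt m)^2 = m" using assms by simp
  ultimately have "9/16 * m \<le> (sqrt m - sqrt p)^2" by (simp add: power2_eq_square)
  then show ?thesis using psi_ge[OF assms(1,2)] assms by linarith
qed

lemma cover:
  fixes pi mu nu g :: "'a \<Rightarrow> real" and A :: "'a set"
  assumes fin: "finite A"
   and pin: "\<And>a. a\<in>A \<Longrightarrow> 0 \<le> pi a" and pis: "(\<Sum>a\<in>A. pi a) = 1"
   and mup: "\<And>a. a\<in>A \<Longrightarrow> 0 < mu a" and mus: "(\<Sum>a\<in>A. mu a) = 1"
   and nup: "\<And>a. a\<in>A \<Longrightarrow> 0 < nu a" and nus: "(\<Sum>a\<in>A. nu a) = 1"
   and E: "\<And>a. a\<in>A \<Longrightarrow> mu a \<le> E * nu a" and E1: "1 \<le> E" and lam: "0 < l"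
  shows "(\<Sum>a\<in>A. mu a * g a) - (\<Sum>a\<in>A. nu a * g a) \<le>
     l * (1 + 15 * E * (\<Sum>a\<in>A. psi (pi a) (mu a))) + 3/(2*l) * (\<Sum>b\<in>A. \<Sum>c\<in>A. pi b * nu c * (g b - g c)^2)"
proof -
  define H where "H = (\<Sum>b\<in>A. \<Sum>c\<in>A. pi b * nu c * (g b - g c)^2)"
  define Wt where "Wt = (\<Sum>b\<in>A. \<Sum>c\<in>A. pi b * nu c * \<bar>g b - g c\<bar>)"
  define S where "S = {a\<in>A. 0 < pi a \<and> mu a \<le> 16 * pi a}"
  define z where "z a = (if a \<in> S then 0 else mu a)" for a
  define G where "G = (\<Sum>c\<in>A. nu c * g c)"
  define e where "e a = g a - G" for a
  define K where "K = (\<Sum>a\<in>A. psi (pi a) (mu a))"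
  have psinn: "\<And>a. a\<in>A \<Longrightarrow> 0 \<le> psi (pi a) (mu a)" using pin mup psi_nonneg by blast
  have K0: "0 \<le> K" unfolding K_def using psinn by (simp add: sum_nonneg)
  have Wt0: "0 \<le> Wt" unfolding Wt_def using pin nup by (intro sum_nonneg mult_nonneg_nonneg) (auto simp: less_imp_le)
  have H0: "0 \<le> H" unfolding H_def using pin nup by (intro sum_nonneg mult_nonneg_nonneg) (auto simp: less_imp_le)
  have e_alt1: "e a = (\<Sum>c\<in>A. nu c * (g a - g c))" for a
    by (simp add: e_def G_def right_diff_distrib sum_subtractf flip: sum_distrib_right) (simp add: nus)
  have e_alt2: "e a = (\<Sum>b\<in>A. pi b * ((\<Sum>c\<in>A. nu c * (g b - g c)) - (g b - g a)))" for a
  proof -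
    have "(\<Sum>c\<in>A. nu c * (g b - g c)) - (g b - g a) = e a" for b
      using e_alt1[of b] by (simp add: e_def)
    then have "(\<Sum>b\<in>A. pi b * ((\<Sum>c\<in>A. nu c * (g b - g c)) - (g b - g a))) = (\<Sum>b\<in>A. pi b * e a)"
      by simp
    also have "\<dots> = e a" by (simp add: pis flip: sum_distrib_right)
    finally show ?thesis by simp
  qed
  have lhs: "(\<Sum>a\<in>A. mu a * g a) - (\<Sum>a\<in>A. nu a * g a) = (\<Sum>a\<in>A. mu a * e a)"
    by (simp add: e_def G_def right_diff_distrib sum_subtractf mus flip: sum_distrib_right)
  have per: "mu a * e a \<le> l/2 * ((25 + 2*E) * psi (pi a) (mu a) + 2 * mu a)
      + 1/(2*l) * ((\<Sum>c\<in>A. pi a * nu c * (g a - g c)^2) + (\<Sum>b\<in>A. pi b * nu a * (g b - g a)^2)) + z a * Wt"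
    if a: "a \<in> A" for a
  proof (cases "a \<in> S")
    case True
    then have pa: "0 < pi a" and ma: "mu a \<le> 16 * pi a" by (auto simp: S_def)
    have "mu a * e a = (\<Sum>c\<in>A. (nu c * pi a) * ((mu a / pi a) * (g a - g c)))"
      using pa unfolding e_alt1 sum_distrib_left by (intro sum.cong refl) (simp add: field_simps)
    also have "\<dots> \<le> (\<Sum>c\<in>A. (nu c * pi a) * (l/2 * (mu a / pi a)^2 + (g a - g c)^2/(2*l)))"
      using pa nup lam by (intro sum_mono mult_left_mono amgm) (auto intro!: mult_nonneg_nonneg simp: less_imp_le)
    also have "\<dots> = (\<Sum>c\<in>A. nu c) * (pi a * (l/2 * (mu a/pi a)^2)) + (\<Sum>c\<in>A. pi a * nu c * (g a - g c)^2) * (1/(2*l))"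
      unfolding sum_distrib_right sum.distrib[symmetric] by (intro sum.cong refl) (simp add: field_simps)
    also have "\<dots> = l/2 * (mu a^2 / pi a) + 1/(2*l) * (\<Sum>c\<in>A. pi a * nu c * (g a - g c)^2)"
      using pa lam by (simp add: nus power2_eq_square field_simps)
    also have "\<dots> \<le> l/2 * ((25 + 2*E) * psi (pi a) (mu a) + 2 * mu a) + 1/(2*l) * ((\<Sum>c\<in>A. pi a * nu c * (g a - g c)^2) + (\<Sum>b\<in>A. pi b * nu a * (g b - g a)^2)) + z a * Wt"
    proof -
      have "mu a^2 / pi a \<le> 25 * psi (pi a) (mu a) + 2 * mu a" using psi_S pa mup a ma by blast
      moreover have "0 \<le> E * psi (pi a) (mu a)" using E1 psinn a by simp
      ultimately have "l/2 * (mu a^2 / pi a) \<le> l/2 * ((25 + 2*E) * psi (pi a) (mu a) + 2 * mu a)"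
        using lam by (intro mult_left_mono) (auto simp: algebra_simps)
      moreover have "0 \<le> (\<Sum>b\<in>A. pi b * nu a * (g b - g a)^2)"
        using pin nup a by (intro sum_nonneg mult_nonneg_nonneg) (auto simp: less_imp_le)
      then have "1/(2*l) * (\<Sum>c\<in>A. pi a * nu c * (g a - g c)^2) \<le> 1/(2*l) * ((\<Sum>c\<in>A. pi a * nu c * (g a - g c)^2) + (\<Sum>b\<in>A. pi b * nu a * (g b - g a)^2))"
        using lam by (intro mult_left_mono) auto
      moreover have "z a * Wt = 0" using True by (simp add: z_def)
      ultimately show ?thesis by linarith
    qed
    finally show ?thesis .
  next
    case False
    then have Z: "\<not> (0 < pi a \<and> mu a \<le> 16 * pi a)" using a by (auto simp: S_def)
    have "mu a * e a = mu a * (\<Sum>b\<in>A. \<Sum>c\<in>A. pi b * nu c * (g b - g c)) + (\<Sum>b\<in>A. - (pi b * mu a * (g b - g a)))"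
    proof -
      define Sb where "Sb b = (\<Sum>c\<in>A. nu c * (g b - g c))" for b
      have "mu a * e a = (\<Sum>b\<in>A. mu a * (pi b * Sb b) + - (pi b * mu a * (g b - g a)))"
        unfolding e_alt2 sum_distrib_left Sb_def[symmetric] by (intro sum.cong refl) (simp add: algebra_simps)
      then have "mu a * e a = (\<Sum>b\<in>A. mu a * (pi b * (\<Sum>c\<in>A. nu c * (g b - g c))) + - (pi b * mu a * (g b - g a)))"
        by (simp add: Sb_def)
      moreover have "(\<Sum>b\<in>A. mu a * (pi b * (\<Sum>c\<in>A. nu c * (g b - g c)))) = mu a * (\<Sum>b\<in>A. \<Sum>c\<in>A. pi b * nu c * (g b - g c))"
        unfolding sum_distrib_left by (intro sum.cong refl) (simp add: ac_simps)
      ultimately show ?thesis by (simp add: sum_subtractf sum_negf)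
    qed
    also have "\<dots> \<le> mu a * Wt + (\<Sum>b\<in>A. (pi b * nu a) * (l/2 * (mu a / nu a)^2 + (g b - g a)^2/(2*l)))"
    proof (intro add_mono mult_left_mono sum_mono)
      show "(\<Sum>b\<in>A. \<Sum>c\<in>A. pi b * nu c * (g b - g c)) \<le> Wt" unfolding Wt_def
        using pin nup by (intro sum_mono mult_left_mono abs_ge_self mult_nonneg_nonneg) (auto simp: less_imp_le)
    next
      fix b assume b: "b \<in> A"
      have "- (pi b * mu a * (g b - g a)) = (pi b * nu a) * ((mu a / nu a) * (- (g b - g a)))"
        using nup[OF a] by (simp add: field_simps)
      also have "\<dots> \<le> (pi b * nu a) * (l/2 * (mu a / nu a)^2 + (- (g b - g a))^2/(2*l))"
        using pin[OF b] nup[OF a] lam by (intro mult_left_mono amgm) auto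
      finally show "- (pi b * mu a * (g b - g a)) \<le> (pi b * nu a) * (l/2 * (mu a / nu a)^2 + (g b - g a)^2/(2*l))"
        by (simp add: power2_commute)
    qed (use mup a in \<open>auto intro: less_imp_le\<close>)
    also have "\<dots> = mu a * Wt + ((\<Sum>b\<in>A. pi b) * (nu a * (l/2 * (mu a/nu a)^2)) + (\<Sum>b\<in>A. pi b * nu a * (g b - g a)^2) * (1/(2*l)))"
      unfolding sum_distrib_right sum.distrib[symmetric] by (intro arg_cong2[where f="(+)"] refl sum.cong) (simp add: field_simps)
    also have "\<dots> = mu a * Wt + l/2 * (mu a^2 / nu a) + 1/(2*l) * (\<Sum>b\<in>A. pi b * nu a * (g b - g a)^2)"
      using nup[OF a] lam by (simp add: pis power2_eq_square field_simps)
    also have "\<dots> \<le> l/2 * ((25 + 2*E) * psi (pi a) (mu a) + 2 * mu a) + 1/(2*l) * ((\<Sum>c\<in>A. pi a * nu c * (g a - g c)^2) + (\<Sum>b\<in>A. pi b * nu a * (g b - g a)^2)) + z a * Wt"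
    proof -
      have "mu a^2 / nu a \<le> E * mu a"
        using E[OF a] nup[OF a] mup[OF a] by (simp add: power2_eq_square field_simps mult_left_mono)
      also have "\<dots> \<le> E * (2 * psi (pi a) (mu a))" using psi_Z[OF pin[OF a] mup[OF a] Z] E1 by simp
      finally have "mu a^2 / nu a \<le> (25 + 2*E) * psi (pi a) (mu a) + 2 * mu a"
        using psinn[OF a] mup[OF a] by (simp add: algebra_simps)
      then have "l/2 * (mu a^2 / nu a) \<le> l/2 * ((25 + 2*E) * psi (pi a) (mu a) + 2 * mu a)"
        using lam by (intro mult_left_mono) auto
      moreover have "0 \<le> (\<Sum>c\<in>A. pi a * nu c * (g a - g c)^2)"
        using pin nup a by (intro sum_nonneg mult_nonneg_nonneg) (auto simp: less_imp_le)
      then have "1/(2*l) * (\<Sum>b\<in>A. pi b * nu a * (g b - g a)^2) \<le> 1/(2*l) * ((\<Sum>c\<in>A. pi a * nu c * (g a - g c)^2) + (\<Sum>b\<in>A. pi b * nu a * (g b - g a)^2))"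
        using lam by (intro mult_left_mono) auto
      moreover have "z a * Wt = mu a * Wt" using False by (simp add: z_def)
      ultimately show ?thesis by linarith
    qed
    finally show ?thesis .
  qed
  define M where "M = (\<Sum>a\<in>A. z a)"
  have zle: "z a \<le> 2 * psi (pi a) (mu a)" if a: "a \<in> A" for a
  proof (cases "a \<in> S")
    case True then show ?thesis using psinn[OF a] by (simp add: z_def)
  next
    case False
    then have "\<not> (0 < pi a \<and> mu a \<le> 16 * pi a)" using a by (simp add: S_def)
    then show ?thesis using psi_Z[OF pin[OF a] mup[OF a]] False by (simp add: z_def)
  qed
  have M2K: "M \<le> 2 * K" unfolding M_def K_def using zle by (simp add: sum_distrib_left sum_mono)
  have "M \<le> (\<Sum>a\<in>A. mu a)" unfolding M_def using mup by (intro sum_mono) (auto simp: z_def less_imp_le)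
  then have M1: "M \<le> 1" using mus by simp
  have M0: "0 \<le> M" unfolding M_def using mup by (intro sum_nonneg) (auto simp: z_def less_imp_le)
  have MW: "M * Wt \<le> l/2 * M^2 + H/(2*l)"
  proof -
    have "M * Wt = (\<Sum>b\<in>A. \<Sum>c\<in>A. (pi b * nu c) * (M * \<bar>g b - g c\<bar>))"
      by (simp add: Wt_def sum_distrib_left algebra_simps)
    also have "\<dots> \<le> (\<Sum>b\<in>A. \<Sum>c\<in>A. (pi b * nu c) * (l/2 * M^2 + \<bar>g b - g c\<bar>^2/(2*l)))"
      using pin nup lam by (intro sum_mono mult_left_mono amgm) (auto intro!: mult_nonneg_nonneg simp: less_imp_le)
    also have "\<dots> = l/2 * M^2 * (\<Sum>b\<in>A. \<Sum>c\<in>A. pi b * nu c) + H/(2*l)"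
      by (simp add: H_def distrib_left sum.distrib sum_distrib_left sum_divide_distrib algebra_simps)
    also have "(\<Sum>b\<in>A. \<Sum>c\<in>A. pi b * nu c) = 1"
      by (simp add: pis nus flip: sum_distrib_left sum_distrib_right)
    finally show ?thesis by simp
  qed
  have swap: "(\<Sum>a\<in>A. \<Sum>b\<in>A. pi b * nu a * (g b - g a)^2) = H"
    unfolding H_def by (rule sum.swap)
  have "(\<Sum>a\<in>A. mu a * e a) \<le> (\<Sum>a\<in>A. l/2 * ((25 + 2*E) * psi (pi a) (mu a) + 2 * mu a)
      + 1/(2*l) * ((\<Sum>c\<in>A. pi a * nu c * (g a - g c)^2) + (\<Sum>b\<in>A. pi b * nu a * (g b - g a)^2)) + z a * Wt)"
    using per by (rule sum_mono)
  also have "\<dots> = l/2 * ((25 + 2*E) * K + 2) + 1/(2*l) * (H + H) + M * Wt"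
  proof -
    have 1: "(\<Sum>a\<in>A. l/2 * ((25 + 2*E) * psi (pi a) (mu a) + 2 * mu a)) = l/2 * ((25 + 2*E) * K + 2)"
    proof -
      have "(\<Sum>a\<in>A. (25 + 2*E) * psi (pi a) (mu a) + 2 * mu a) = (25 + 2*E) * K + 2"
        unfolding sum.distrib K_def sum_distrib_left[symmetric] mus by simp
      then show ?thesis unfolding sum_distrib_left[symmetric] by simp
    qed
    have 2: "(\<Sum>a\<in>A. 1/(2*l) * ((\<Sum>c\<in>A. pi a * nu c * (g a - g c)^2) + (\<Sum>b\<in>A. pi b * nu a * (g b - g a)^2))) = 1/(2*l) * (H + H)"
    proof -
      have "(\<Sum>a\<in>A. (\<Sum>c\<in>A. pi a * nu c * (g a - g c)^2) + (\<Sum>b\<in>A. pi b * nu a * (g b - g a)^2)) = H + H"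
        unfolding sum.distrib swap by (simp add: H_def)
      then show ?thesis unfolding sum_distrib_left[symmetric] by simp
    qed
    have 3: "(\<Sum>a\<in>A. z a * Wt) = M * Wt" by (simp add: M_def sum_distrib_right)
    show ?thesis unfolding sum.distrib 1 2 3 ..
  qed
  also have "\<dots> \<le> l/2 * ((25 + 2*E) * K + 2) + 1/(2*l) * (H + H) + (l/2 * M^2 + H/(2*l))"
    using MW by simp
  also have "\<dots> \<le> l * (1 + 15 * E * K) + 3/(2*l) * H"
  proof -
    have "M^2 \<le> M" using M0 M1 by (simp add: power2_eq_square mult_left_le)
    then have "M^2 \<le> 2 * K" using M2K by simp
    then have "l/2 * M^2 \<le> l * K" using lam by (simp add: mult_left_mono)
    moreover have "(25 + 2*E) * K + 2 * K \<le> 30 * E * K" using E1 K0 mult_right_mono[OF E1, of "K*28"] by (simp add: algebra_simps)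
    then have "l/2*((25 + 2*E) * K + 2 * K) \<le> l/2*(30 * E * K)" using lam by (intro mult_left_mono) auto
    moreover have "l/2*((25+2*E)*K + 2) + l*K = l + l/2*((25 + 2*E)*K + 2*K)" by (simp add: algebra_simps)
    moreover have "l*(1+15*E*K) = l + l/2*(30*E*K)" by (simp add: algebra_simps)
    moreover have "1/(2*l) * (H + H) + H/(2*l) = 3/(2*l) * H" by (simp add: field_simps)
    ultimately show ?thesis by linarith
  qed
  finally show ?thesis using lhs by (simp add: K_def H_def)
qed

lemma kappa_ge: fixes x :: real assumes "1 < x" shows "0 < x - 1 - ln x" "x \<le> kappa x"
proof -
  have "ln x \<le> 2 * sqrt x - 2" using assms by (intro sqrt_ln_bound) simp
  moreover have "sqrt x \<noteq> 1" using assms by simp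
  then have "0 < (sqrt x - 1)^2" by simp
  then have "2 * sqrt x - 2 < x - 1" using assms by (simp add: power2_diff)
  ultimately show pos: "0 < x - 1 - ln x" by simp
  have "ln (1/x) \<le> 1/x - 1" using assms by (intro ln_le_minus_one) simp
  then have "1 - 1/x \<le> ln x" using assms by (simp add: ln_div)
  then have "x * (1 - 1/x) \<le> x * ln x" using assms by (intro mult_left_mono) auto
  moreover have "x * (1 - 1/x) = x - 1" using assms by (simp add: field_simps)
  moreover have "(x-1)^2 - x*(x-1-ln x) = x * ln x - (x - 1)" by (simp add: power2_eq_square algebra_simps)
  ultimately have "x * (x - 1 - ln x) \<le> (x-1)^2" by linarith
  then show "x \<le> kappa x" unfolding kappa_def using pos by (simp add: field_simps)
qed

locale setting =
  fixes A :: "'a set" and \<rho> :: "'s pmf" and pref :: "'s \<Rightarrow> 'a \<Rightarrow> real" and \<beta> R :: real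
    and rstar :: "'s \<Rightarrow> 'a \<Rightarrow> real" and P :: "('s \<Rightarrow> 'a \<Rightarrow> real) set"
  assumes finA: "finite A" and neA: "A \<noteq> {}" and pol_ref: "is_policy A pref"
    and refpos: "\<And>s a. a \<in> A \<Longrightarrow> 0 < pref s a"
    and bpos: "0 < \<beta>" and Rpos: "0 < R"
    and rrange: "\<And>s a. a \<in> A \<Longrightarrow> 0 \<le> rstar s a \<and> rstar s a \<le> R"
    and finP: "finite P" and polP: "\<And>p. p \<in> P \<Longrightarrow> is_policy A p"
    and starP: "pi_star A pref \<beta> rstar \<in> P"
    and ratio: "\<And>p s a. p \<in> P \<Longrightarrow> a \<in> A \<Longrightarrow> \<bar>ln (p s a / pref s a)\<bar> \<le> R / \<beta>"
begin

abbreviation "mu \<equiv> pi_star A pref \<beta> rstar"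
definition Zs :: "'s \<Rightarrow> real" where "Zs s = (\<Sum>b\<in>A. pref s b * exp (rstar s b / \<beta>))"

lemma ref_sum: "(\<Sum>a\<in>A. pref s a) = 1" using pol_ref by (simp add: is_policy_def)
lemma ref_out: "a \<notin> A \<Longrightarrow> pref s a = 0" using pol_ref by (simp add: is_policy_def)

lemma Zs_bounds: "1 \<le> Zs s" "Zs s \<le> exp (R / \<beta>)"
proof -
  have "(\<Sum>b\<in>A. pref s b * 1) \<le> Zs s" unfolding Zs_def
    using refpos rrange bpos by (intro sum_mono mult_left_mono) (auto simp: less_imp_le)
  then show "1 \<le> Zs s" by (simp add: ref_sum)
  have "Zs s \<le> (\<Sum>b\<in>A. pref s b * exp (R / \<beta>))" unfolding Zs_def
    using refpos rrange bpos by (intro sum_mono mult_left_mono) (auto simp: less_imp_le divide_right_mono)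
  then show "Zs s \<le> exp (R / \<beta>)" by (simp add: ref_sum flip: sum_distrib_right)
qed

lemma Zs_pos: "0 < Zs s" using Zs_bounds(1)[of s] by simp

lemma mu_eq: "a \<in> A \<Longrightarrow> mu s a = pref s a * exp (rstar s a / \<beta>) / Zs s"
  by (simp add: pi_star_def Zs_def)

lemma mu_pos: "a \<in> A \<Longrightarrow> 0 < mu s a"
  using Zs_pos[of s] refpos by (simp add: mu_eq)

lemma mu_out: "a \<notin> A \<Longrightarrow> mu s a = 0" by (simp add: pi_star_def)

lemma mu_sum: "(\<Sum>a\<in>A. mu s a) = 1"
  using Zs_pos[of s] by (simp add: mu_eq sum_divide_distrib[symmetric] Zs_def)

lemma mu_le: "a \<in> A \<Longrightarrow> mu s a \<le> exp (R / \<beta>) * pref s a"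
proof -
  assume a: "a \<in> A"
  have "pref s a * exp (rstar s a / \<beta>) / Zs s \<le> pref s a * exp (rstar s a / \<beta>) / 1"
    using Zs_bounds(1)[of s] refpos[OF a, where s=s] by (intro divide_left_mono) (auto simp: less_imp_le)
  then have "mu s a \<le> pref s a * exp (rstar s a / \<beta>)" using a by (simp add: mu_eq)
  also have "\<dots> \<le> pref s a * exp (R / \<beta>)" using rrange[OF a] refpos[OF a, where s=s] bpos
    by (intro mult_left_mono) (auto simp: divide_right_mono less_imp_le)
  finally show ?thesis by (simp add: mult.commute)
qed

lemma ln_mu_ref: "a \<in> A \<Longrightarrow> ln (mu s a / pref s a) = rstar s a / \<beta> - ln (Zs s)"
  using refpos[of a s] Zs_pos[of s] by (simp add: mu_eq ln_div)

lemma pol_mu: "is_policy A mu"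
  unfolding is_policy_def using mu_pos mu_out mu_sum by (auto intro: less_imp_le) (metis less_imp_le mu_out order_refl mu_pos)

lemma conv_polE:
  assumes "p \<in> conv_pol P"
  obtains F w where "finite F" "F \<subseteq> P" "\<forall>q\<in>F. 0 \<le> w q" "(\<Sum>q\<in>F. w q) = 1"
    "p = (\<lambda>s a. \<Sum>q\<in>F. w q * q s a)"
  using assms unfolding conv_pol_def by blast

lemma conv_pol_policy: assumes "p \<in> conv_pol P" shows "is_policy A p"
proof -
  obtain F w where F: "finite F" "F \<subseteq> P" "\<forall>q\<in>F. 0 \<le> w q" "(\<Sum>q\<in>F. w q) = 1"
    and p: "p = (\<lambda>s a. \<Sum>q\<in>F. w q * q s a)" using conv_polE[OF assms] by blast
  have qp: "\<And>q. q \<in> F \<Longrightarrow> is_policy A q" using F polP by auto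
  show ?thesis unfolding is_policy_def
  proof (intro allI conjI impI)
    fix s a show "0 \<le> p s a" unfolding p using F qp
      by (intro sum_nonneg mult_nonneg_nonneg) (auto simp: is_policy_def)
  next
    fix s a assume "a \<notin> A" then show "p s a = 0" unfolding p using qp by (auto simp: is_policy_def intro!: sum.neutral)
  next
    fix s
    have "(\<Sum>a\<in>A. p s a) = (\<Sum>q\<in>F. w q * (\<Sum>a\<in>A. q s a))"
      unfolding p by (simp add: sum_distrib_left) (rule sum.swap)
    also have "\<dots> = (\<Sum>q\<in>F. w q)" using qp by (intro sum.cong) (auto simp: is_policy_def)
    finally show "(\<Sum>a\<in>A. p s a) = 1" using F by simp
  qed
qed

lemma P_le: assumes "q \<in> P" "a \<in> A" shows "q s a \<le> exp (R/\<beta>) * pref s a"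
proof (cases "q s a = 0")
  case True then show ?thesis using refpos[OF assms(2), where s=s] by (simp add: less_imp_le)
next
  case False
  then have qpos: "0 < q s a" using polP[OF assms(1)] by (simp add: is_policy_def less_le)
  have "ln (q s a / pref s a) \<le> R / \<beta>" using ratio[OF assms, of s] by (simp add: abs_le_iff)
  then have "q s a / pref s a \<le> exp (R / \<beta>)"
    using qpos refpos[OF assms(2), where s=s] by (metis divide_pos_pos exp_le_cancel_iff exp_ln)
  then show ?thesis using refpos[OF assms(2), where s=s] by (simp add: divide_le_eq mult.commute)
qed

lemma conv_le: assumes "p \<in> conv_pol P" "a \<in> A" shows "p s a \<le> exp (R/\<beta>) * pref s a"
proof -
  obtain F w where F: "finite F" "F \<subseteq> P" "\<forall>q\<in>F. 0 \<le> w q" "(\<Sum>q\<in>F. w q) = 1"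
    and p: "p = (\<lambda>s a. \<Sum>q\<in>F. w q * q s a)" using conv_polE[OF assms(1)] by blast
  have "p s a \<le> (\<Sum>q\<in>F. w q * (exp (R/\<beta>) * pref s a))"
    unfolding p using F P_le assms(2) by (intro sum_mono mult_left_mono) auto
  also have "\<dots> = exp (R/\<beta>) * pref s a" using F by (simp flip: sum_distrib_right)
  finally show ?thesis .
qed

lemma mu_conv: "mu \<in> conv_pol P"
  unfolding conv_pol_def using starP
  by (intro CollectI exI[of _ "{mu}"] exI[of _ "\<lambda>_. 1"]) auto

lemma pol_nonneg: "is_policy A p \<Longrightarrow> 0 \<le> p s a" by (simp add: is_policy_def)
lemma pol_sum: "is_policy A p \<Longrightarrow> (\<Sum>a\<in>A. p s a) = 1" by (simp add: is_policy_def)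

lemma j_identity:
  assumes "is_policy A p"
  shows "(\<Sum>a\<in>A. p s a * rstar s a) - \<beta> * KL_s A p pref s = \<beta> * ln (Zs s) - \<beta> * KL_s A p mu s"
proof -
  have trm: "\<beta> * (if p s a = 0 then 0 else p s a * ln (p s a / pref s a))
      = \<beta> * (if p s a = 0 then 0 else p s a * ln (p s a / mu s a)) + p s a * rstar s a - \<beta> * ln (Zs s) * p s a"
    if a: "a \<in> A" for a
  proof (cases "p s a = 0")
    case True then show ?thesis by simp
  next
    case False
    then have pp: "0 < p s a" using pol_nonneg[OF assms, of s a] by simp
    have "ln (p s a / pref s a) = ln (p s a / mu s a) + ln (mu s a / pref s a)"
      using pp refpos[OF a, where s=s] mu_pos[OF a, where s=s] by (simp add: ln_div)
    also have "\<dots> = ln (p s a / mu s a) + rstar s a / \<beta> - ln (Zs s)" using ln_mu_ref[OF a] by simp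
    finally have L: "ln (p s a / pref s a) = ln (p s a / mu s a) + rstar s a / \<beta> - ln (Zs s)" .
    have "\<beta> * (p s a * ln (p s a / pref s a)) = \<beta> * (p s a * ln (p s a / mu s a)) + p s a * rstar s a - \<beta> * ln (Zs s) * p s a"
      unfolding L using bpos by (simp add: field_simps)
    then show ?thesis using False by simp
  qed
  have "\<beta> * KL_s A p pref s = (\<Sum>a\<in>A. \<beta> * (if p s a = 0 then 0 else p s a * ln (p s a / pref s a)))"
    by (simp add: KL_s_def sum_distrib_left)
  also have "\<dots> = (\<Sum>a\<in>A. \<beta> * (if p s a = 0 then 0 else p s a * ln (p s a / mu s a)) + p s a * rstar s a - \<beta> * ln (Zs s) * p s a)"
    using trm by (rule sum.cong[OF refl])
  also have "\<dots> = \<beta> * KL_s A p mu s + (\<Sum>a\<in>A. p s a * rstar s a) - \<beta> * ln (Zs s) * (\<Sum>a\<in>A. p s a)"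
    by (simp add: KL_s_def sum.distrib sum_subtractf sum_distrib_left)
  finally show ?thesis using pol_sum[OF assms] by simp
qed

lemma rsum_bounds: assumes "is_policy A p" shows "0 \<le> (\<Sum>a\<in>A. p s a * rstar s a)" "(\<Sum>a\<in>A. p s a * rstar s a) \<le> R"
proof -
  show "0 \<le> (\<Sum>a\<in>A. p s a * rstar s a)" using rrange pol_nonneg[OF assms] by (intro sum_nonneg) auto
  have "(\<Sum>a\<in>A. p s a * rstar s a) \<le> (\<Sum>a\<in>A. p s a * R)"
    using rrange pol_nonneg[OF assms] by (intro sum_mono mult_left_mono) auto
  then show "(\<Sum>a\<in>A. p s a * rstar s a) \<le> R" using pol_sum[OF assms] by (simp flip: sum_distrib_right)
qed

lemma KL_ref_bounds: assumes "p \<in> conv_pol P" shows "0 \<le> KL_s A p pref s" "KL_s A p pref s \<le> R / \<beta>"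
proof -
  have pol: "is_policy A p" by (rule conv_pol_policy[OF assms])
  have up: "(if p s a = 0 then 0 else p s a * ln (p s a / pref s a)) \<le> p s a * (R/\<beta>)"
    and lo: "p s a - pref s a \<le> (if p s a = 0 then 0 else p s a * ln (p s a / pref s a))" if a: "a \<in> A" for a
  proof -
    show "(if p s a = 0 then 0 else p s a * ln (p s a / pref s a)) \<le> p s a * (R/\<beta>)"
    proof (cases "p s a = 0")
      case False
      then have pp: "0 < p s a" using pol_nonneg[OF pol, of s a] by simp
      have "ln (p s a / pref s a) \<le> ln (exp (R/\<beta>))"
        using conv_le[OF assms a, of s] pp refpos[OF a, where s=s] by (intro ln_mono) (auto simp: divide_le_eq mult.commute)
      then have "p s a * ln (p s a / pref s a) \<le> p s a * (R/\<beta>)" using pp by (intro mult_left_mono) auto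
      then show ?thesis using False by simp
    qed (use bpos Rpos in simp)
    show "p s a - pref s a \<le> (if p s a = 0 then 0 else p s a * ln (p s a / pref s a))"
    proof (cases "p s a = 0")
      case False
      then have pp: "0 < p s a" using pol_nonneg[OF pol, of s a] by simp
      have "ln (pref s a / p s a) \<le> pref s a / p s a - 1" using pp refpos[OF a, where s=s] by (intro ln_le_minus_one) simp
      then have "1 - pref s a / p s a \<le> ln (p s a / pref s a)" using pp refpos[OF a, where s=s] by (simp add: ln_div)
      then have "p s a * (1 - pref s a / p s a) \<le> p s a * ln (p s a / pref s a)" using pp by (intro mult_left_mono) auto
      moreover have "p s a * (1 - pref s a / p s a) = p s a - pref s a" using pp by (simp add: field_simps)
      ultimately show ?thesis using False by simp
    qed (use refpos[OF a, where s=s] in \<open>simp add: less_imp_le\<close>)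
  qed
  have "KL_s A p pref s \<le> (\<Sum>a\<in>A. p s a * (R/\<beta>))" unfolding KL_s_def using up by (rule sum_mono)
  also have "(\<Sum>a\<in>A. p s a * (R/\<beta>)) = (\<Sum>a\<in>A. p s a) * (R/\<beta>)" by (rule sum_distrib_right[symmetric])
  finally show "KL_s A p pref s \<le> R / \<beta>" using pol_sum[OF pol, of s] by simp
  have "(\<Sum>a\<in>A. p s a - pref s a) \<le> KL_s A p pref s" unfolding KL_s_def using lo by (rule sum_mono)
  then show "0 \<le> KL_s A p pref s" using pol_sum[OF pol] ref_sum by (simp add: sum_subtractf)
qed

lemma lnZ_bounds: "0 \<le> ln (Zs s)" "ln (Zs s) \<le> R / \<beta>"
  using Zs_bounds[of s] Zs_pos[of s] ln_mono[OF Zs_bounds(2) Zs_pos, of s] by auto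

lemma KL_mu_bound: assumes "p \<in> conv_pol P" shows "\<bar>KL_s A p mu s\<bar> \<le> 3 * R / \<beta>"
proof -
  have pol: "is_policy A p" by (rule conv_pol_policy[OF assms])
  have e: "\<beta> * KL_s A p mu s = \<beta> * ln (Zs s) - (\<Sum>a\<in>A. p s a * rstar s a) + \<beta> * KL_s A p pref s"
    using j_identity[OF pol, of s] by simp
  have b1: "\<beta> * ln (Zs s) \<le> R" "0 \<le> \<beta> * ln (Zs s)" using lnZ_bounds[of s] bpos by (auto simp: field_simps)
  have b2: "\<beta> * KL_s A p pref s \<le> R" "0 \<le> \<beta> * KL_s A p pref s"
    using KL_ref_bounds[OF assms, of s] bpos by (auto simp: field_simps)
  have "\<bar>\<beta> * KL_s A p mu s\<bar> \<le> 3 * R" using e b1 b2 rsum_bounds[OF pol, of s] by linarith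
  then show ?thesis using bpos by (simp add: field_simps abs_mult)
qed

lemma KL_psi: assumes "is_policy A p" shows "KL_s A p mu s = (\<Sum>a\<in>A. psi (p s a) (mu s a))"
  unfolding KL_s_def psi_def
  by (simp add: sum.distrib sum_subtractf pol_sum[OF assms] mu_sum)

lemma KL_mu_mu: "KL_s A mu mu s = 0"
  unfolding KL_s_def using mu_pos by (intro sum.neutral) auto

lemma J_gap: assumes "p \<in> conv_pol P"
  shows "J_beta \<rho> A pref \<beta> rstar mu - J_beta \<rho> A pref \<beta> rstar p = \<beta> * measure_pmf.expectation \<rho> (\<lambda>s. KL_s A p mu s)"
proof -
  have pol: "is_policy A p" by (rule conv_pol_policy[OF assms])
  have Jp: "J_beta \<rho> A pref \<beta> rstar p = measure_pmf.expectation \<rho> (\<lambda>s. \<beta> * ln (Zs s) - \<beta> * KL_s A p mu s)"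
    unfolding J_beta_def using j_identity[OF pol] by simp
  have Jm: "J_beta \<rho> A pref \<beta> rstar mu = measure_pmf.expectation \<rho> (\<lambda>s. \<beta> * ln (Zs s))"
    unfolding J_beta_def using j_identity[OF pol_mu] KL_mu_mu by simp
  have i1: "integrable (measure_pmf \<rho>) (\<lambda>s. \<beta> * ln (Zs s))"
  proof (rule int_bdd[where B="\<beta> * (R/\<beta>)"])
    fix s
    have "\<beta> * ln (Zs s) \<le> \<beta> * (R/\<beta>)" using lnZ_bounds(2)[of s] bpos by (intro mult_left_mono) auto
    then show "\<bar>\<beta> * ln (Zs s)\<bar> \<le> \<beta> * (R/\<beta>)" using lnZ_bounds(1)[of s] bpos by simp
  qed
  have i2: "integrable (measure_pmf \<rho>) (\<lambda>s. KL_s A p mu s)"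
    by (rule int_bdd[where B="3*R/\<beta>"]) (rule KL_mu_bound[OF assms])
  show ?thesis unfolding Jp Jm
    using i1 i2 by (simp add: Bochner_Integration.integral_diff)
qed

end

lemma int_diff_bdd:
  fixes f g :: "'s \<Rightarrow> real"
  assumes "\<And>s. \<bar>f s\<bar> \<le> Bf" "\<And>s. \<bar>g s\<bar> \<le> Bg"
  shows "measure_pmf.expectation \<rho> (\<lambda>s. f s - g s) = measure_pmf.expectation \<rho> f - measure_pmf.expectation \<rho> g"
  by (rule Bochner_Integration.integral_diff) (auto intro: int_bdd assms)

lemma int_mult_c: "measure_pmf.expectation \<rho> (\<lambda>s. c * f s) = c * measure_pmf.expectation \<rho> f"
  for f :: "'s \<Rightarrow> real" by simp

context setting begin

abbreviation "Rs \<equiv> reward_class A pref \<beta> R P"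
abbreviation "rbar \<equiv> reward_of A pref \<beta> R mu"

lemma Rs_range: "r \<in> Rs \<Longrightarrow> 0 \<le> r s a \<and> r s a \<le> R"
  using Rpos by (auto simp: reward_class_def reward_of_def)

lemma rbar_in: "rbar \<in> Rs" using starP by (simp add: reward_class_def)

lemma fin_Rs: "finite Rs" "Rs \<noteq> {}" "card Rs \<le> card P"
  using finP starP by (auto simp: reward_class_def card_image_le)

definition minr :: "'s \<Rightarrow> real" where "minr s = Min ((\<lambda>a. rstar s a) ` A)"

lemma rbar_eq: assumes a: "a \<in> A" shows "rbar s a = rstar s a - minr s"
proof -
  have img: "(\<lambda>a'. \<beta> * ln (mu s a' / pref s a')) ` A = (\<lambda>a'. rstar s a' + (- \<beta> * ln (Zs s))) ` A"
    using bpos by (intro image_cong refl) (simp add: ln_mu_ref field_simps)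
  have "Min ((\<lambda>a'. \<beta> * ln (mu s a' / pref s a')) ` A) = minr s - \<beta> * ln (Zs s)"
    unfolding img minr_def using Min_add_commute[OF finA neA, of "\<lambda>a'. rstar s a'" "- \<beta> * ln (Zs s)"] by simp
  moreover have "\<beta> * ln (mu s a / pref s a) = rstar s a - \<beta> * ln (Zs s)"
    using bpos a by (simp add: ln_mu_ref field_simps)
  moreover have "minr s \<le> rstar s a" unfolding minr_def using finA a by (intro Min_le) auto
  moreover have "0 \<le> minr s" unfolding minr_def using finA neA rrange by (subst Min_ge_iff) auto
  ultimately show ?thesis using rrange[OF a, of s] by (simp add: reward_of_def)
qed

lemma pol_diff_rbar: assumes "is_policy A p"
  shows "(\<Sum>a\<in>A. p s a * rbar s a) - (\<Sum>a\<in>A. pref s a * rbar s a)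
       = (\<Sum>a\<in>A. p s a * rstar s a) - (\<Sum>a\<in>A. pref s a * rstar s a)"
proof -
  have "(\<Sum>a\<in>A. q s a * rbar s a) = (\<Sum>a\<in>A. q s a * rstar s a) - minr s" if "is_policy A q" for q
  proof -
    have "(\<Sum>a\<in>A. q s a * rbar s a) = (\<Sum>a\<in>A. q s a * rstar s a - q s a * minr s)"
      by (intro sum.cong) (auto simp: rbar_eq algebra_simps)
    also have "\<dots> = (\<Sum>a\<in>A. q s a * rstar s a) - minr s"
      using pol_sum[OF that, of s] by (simp add: sum_subtractf flip: sum_distrib_right)
    finally show ?thesis .
  qed
  then show ?thesis using assms pol_ref by simp
qed

lemma rsum_bdd: assumes "is_policy A p" "\<And>s a. 0 \<le> r s a \<and> r s a \<le> R"
  shows "\<bar>\<Sum>a\<in>A. p s a * r s a\<bar> \<le> R"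
proof -
  have "0 \<le> (\<Sum>a\<in>A. p s a * r s a)" using assms pol_nonneg[OF assms(1)] by (intro sum_nonneg) auto
  moreover have "(\<Sum>a\<in>A. p s a * r s a) \<le> (\<Sum>a\<in>A. p s a * R)"
    using assms pol_nonneg[OF assms(1)] by (intro sum_mono mult_left_mono) auto
  moreover have "(\<Sum>a\<in>A. p s a * R) = R" using pol_sum[OF assms(1), of s] by (simp flip: sum_distrib_right)
  ultimately show ?thesis by linarith
qed

lemma rstar_range_all: "0 \<le> rstar s a * x" if "a \<in> A" "0 \<le> x" for x using rrange that by simp

definition Dfun :: "('s \<Rightarrow> 'a \<Rightarrow> real) \<Rightarrow> 's \<Rightarrow> real" where
  "Dfun r0 s = ((\<Sum>a\<in>A. mu s a * rstar s a) - (\<Sum>a\<in>A. pref s a * rstar s a))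
             - ((\<Sum>a\<in>A. mu s a * r0 s a) - (\<Sum>a\<in>A. pref s a * r0 s a))"

lemma rpo_key:
  fixes D :: "('s \<times> 'a \<times> 'a \<times> bool) list" and \<eta> :: real
  assumes p: "p \<in> conv_pol P" and r0: "r0 \<in> Rs"
    and le: "rpo_obj \<rho> A pref \<beta> \<eta> D mu r0 \<le> rpo_obj \<rho> A pref \<beta> \<eta> D p rbar"
  shows "J_beta \<rho> A pref \<beta> rstar mu - J_beta \<rho> A pref \<beta> rstar p
      \<le> measure_pmf.expectation \<rho> (Dfun r0) - (L_D D r0 - L_D D rbar) / \<eta>"
proof -
  have polp: "is_policy A p" by (rule conv_pol_policy[OF p])
  let ?E = "measure_pmf.expectation \<rho>"
  define X where "X s = (\<Sum>a\<in>A. p s a * rstar s a) - (\<Sum>a\<in>A. pref s a * rstar s a)" for s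
  define V where "V s = (\<Sum>a\<in>A. mu s a * rstar s a) - (\<Sum>a\<in>A. pref s a * rstar s a)" for s
  define U where "U s = (\<Sum>a\<in>A. mu s a * r0 s a) - (\<Sum>a\<in>A. pref s a * r0 s a)" for s
  define c where "c = ?E (\<lambda>s. \<Sum>a\<in>A. pref s a * rstar s a)"
  have bst: "\<bar>\<Sum>a\<in>A. q s a * rstar s a\<bar> \<le> R" if "is_policy A q" for q s
    using rsum_bounds[OF that, of s] by simp
  have b0: "\<bar>\<Sum>a\<in>A. q s a * r0 s a\<bar> \<le> R" if "is_policy A q" for q s
    using rsum_bdd[OF that] Rs_range[OF r0] by blast
  have bb: "\<bar>\<Sum>a\<in>A. q s a * rbar s a\<bar> \<le> R" if "is_policy A q" for q s
    using rsum_bdd[OF that] Rs_range[OF rbar_in] by blast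
  have bK: "\<bar>KL_s A q pref s\<bar> \<le> R / \<beta>" if "q \<in> conv_pol P" for q s
    using KL_ref_bounds[OF that, of s] by simp
  have bX: "\<bar>X s\<bar> \<le> R + R" for s unfolding X_def using bst[OF polp, of s] bst[OF pol_ref, of s] by linarith
  have bV: "\<bar>V s\<bar> \<le> R + R" for s unfolding V_def using bst[OF pol_mu, of s] bst[OF pol_ref, of s] by linarith
  have bU: "\<bar>U s\<bar> \<le> R + R" for s unfolding U_def using b0[OF pol_mu, of s] b0[OF pol_ref, of s] by linarith
  have bnd_add: "\<bar>x s + y s\<bar> \<le> a + b" if "\<And>s. \<bar>x s\<bar> \<le> (a::real)" "\<And>s. \<bar>y s\<bar> \<le> b" for x y a b s
    using that(1)[of s] that(2)[of s] by (smt (verit))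
  have bnd_mult: "\<bar>\<beta> * k s\<bar> \<le> \<beta> * (R/\<beta>)" if "\<And>s. \<bar>k s\<bar> \<le> R/\<beta>" for k s
  proof -
    have "\<beta> * \<bar>k s\<bar> \<le> \<beta> * (R/\<beta>)" using that[of s] bpos by (intro mult_left_mono) auto
    then show ?thesis using bpos by (simp add: abs_mult)
  qed
  have i_ref: "integrable (measure_pmf \<rho>) (\<lambda>s. \<Sum>a\<in>A. pref s a * rstar s a)" by (rule int_bdd) (rule bst[OF pol_ref])
  have Jp: "J_beta \<rho> A pref \<beta> rstar p = ?E X + c - \<beta> * ?E (\<lambda>s. KL_s A p pref s)"
  proof -
    have "J_beta \<rho> A pref \<beta> rstar p = ?E (\<lambda>s. (X s + (\<Sum>a\<in>A. pref s a * rstar s a)) - \<beta> * KL_s A p pref s)"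
      unfolding J_beta_def X_def by simp
    also have "\<dots> = ?E (\<lambda>s. X s + (\<Sum>a\<in>A. pref s a * rstar s a)) - ?E (\<lambda>s. \<beta> * KL_s A p pref s)"
      by (rule int_diff_bdd[where Bf="R+R+R" and Bg="\<beta>*(R/\<beta>)"])
        (use bnd_add[OF bX bst[OF pol_ref]] bnd_mult[OF bK[OF p]] in auto)
    also have "?E (\<lambda>s. X s + (\<Sum>a\<in>A. pref s a * rstar s a)) = ?E X + c"
      unfolding c_def by (rule Bochner_Integration.integral_add) (auto intro: int_bdd bX bst[OF pol_ref])
    finally show ?thesis by simp
  qed
  have Jm: "J_beta \<rho> A pref \<beta> rstar mu = ?E V + c - \<beta> * ?E (\<lambda>s. KL_s A mu pref s)"
  proof -
    have "J_beta \<rho> A pref \<beta> rstar mu = ?E (\<lambda>s. (V s + (\<Sum>a\<in>A. pref s a * rstar s a)) - \<beta> * KL_s A mu pref s)"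
      unfolding J_beta_def V_def by simp
    also have "\<dots> = ?E (\<lambda>s. V s + (\<Sum>a\<in>A. pref s a * rstar s a)) - ?E (\<lambda>s. \<beta> * KL_s A mu pref s)"
      by (rule int_diff_bdd[where Bf="R+R+R" and Bg="\<beta>*(R/\<beta>)"])
        (use bnd_add[OF bV bst[OF pol_ref]] bnd_mult[OF bK[OF mu_conv]] in auto)
    also have "?E (\<lambda>s. V s + (\<Sum>a\<in>A. pref s a * rstar s a)) = ?E V + c"
      unfolding c_def by (rule Bochner_Integration.integral_add) (auto intro: int_bdd bV bst[OF pol_ref])
    finally show ?thesis by simp
  qed
  have Rp: "rpo_obj \<rho> A pref \<beta> \<eta> D p rbar = ?E X - \<beta> * ?E (\<lambda>s. KL_s A p pref s) + L_D D rbar / \<eta>"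
    unfolding rpo_obj_def KL_pol_def X_def using pol_diff_rbar[OF polp] by simp
  have Rm: "rpo_obj \<rho> A pref \<beta> \<eta> D mu r0 = ?E U - \<beta> * ?E (\<lambda>s. KL_s A mu pref s) + L_D D r0 / \<eta>"
    unfolding rpo_obj_def KL_pol_def U_def by simp
  have "?E (Dfun r0) = ?E (\<lambda>s. V s - U s)" unfolding Dfun_def V_def U_def by simp
  also have "\<dots> = ?E V - ?E U" by (rule int_diff_bdd[OF bV bU])
  finally have ED: "?E (Dfun r0) = ?E V - ?E U" .
  show ?thesis using le unfolding Jp Jm Rp Rm ED by (simp add: diff_divide_distrib)
qed

end

lemma pol_pmf_pmf: assumes "is_policy A p" "finite A"
  shows "pmf (pol_pmf p s) a = p s a" "set_pmf (pol_pmf p s) \<subseteq> A"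
proof -
  have nn: "\<And>x. 0 \<le> p s x" using assms by (simp add: is_policy_def)
  have "(\<integral>\<^sup>+x. ennreal (p s x) \<partial>count_space UNIV) = (\<Sum>x\<in>A. ennreal (p s x))"
    using assms by (intro nn_integral_count_space') (auto simp: is_policy_def)
  also have "\<dots> = 1" using assms nn by (simp add: is_policy_def)
  finally have one: "(\<integral>\<^sup>+x. ennreal (p s x) \<partial>count_space UNIV) = 1" .
  show pm: "pmf (pol_pmf p s) a = p s a" unfolding pol_pmf_def
    by (rule pmf_embed_pmf) (use nn one in auto)
  show "set_pmf (pol_pmf p s) \<subseteq> A" unfolding pol_pmf_def
    using set_embed_pmf[of "\<lambda>a. p s a"] nn one assms by (auto simp: is_policy_def)
qed

lemma int_pol_pmf: assumes "is_policy A p" "finite A"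
  shows "measure_pmf.expectation (pol_pmf p s) f = (\<Sum>a\<in>A. p s a * f a)"
proof -
  have "measure_pmf.expectation (pol_pmf p s) f = (\<Sum>a\<in>A. pmf (pol_pmf p s) a *\<^sub>R f a)"
    by (rule integral_measure_pmf[OF assms(2)]) (use pol_pmf_pmf[OF assms] in auto)
  then show ?thesis using pol_pmf_pmf(1)[OF assms] by simp
qed

lemma neg_ln_sigmoid: "0 \<le> - ln (sigmoid x)" "- ln (sigmoid x) \<le> 1 + \<bar>x\<bar>"
proof -
  show "0 \<le> - ln (sigmoid x)" using sigmoid_pos[of x] sigmoid_lt1[of x] by simp
  have e: "- ln (sigmoid x) = ln (1 + exp (-x))" unfolding sigmoid_def
    by (simp add: ln_div add_pos_pos)
  have "exp (-x) \<le> exp \<bar>x\<bar>" by simp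
  moreover have "1 + exp \<bar>x\<bar> \<le> exp 1 * exp \<bar>x\<bar>"
  proof -
    have "1 \<le> exp \<bar>x\<bar>" by simp
    moreover have "2 \<le> exp (1::real)" using exp_ge_add_one_self[of 1] by simp
    ultimately have "2 * exp \<bar>x\<bar> \<le> exp 1 * exp \<bar>x\<bar>" by (intro mult_right_mono) auto
    then show ?thesis using \<open>1 \<le> exp \<bar>x\<bar>\<close> by linarith
  qed
  ultimately have "1 + exp (-x) \<le> exp 1 * exp \<bar>x\<bar>" by linarith
  then have "1 + exp (-x) \<le> exp (1 + \<bar>x\<bar>)" by (simp add: exp_add)
  then have "ln (1 + exp (-x)) \<le> ln (exp (1 + \<bar>x\<bar>))" by (intro ln_mono) (auto simp: add_pos_pos)
  then show "- ln (sigmoid x) \<le> 1 + \<bar>x\<bar>" using e by simp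
qed

lemma bt_loss_bdd: assumes "\<And>s a. 0 \<le> r s a \<and> r s a \<le> R"
  shows "0 \<le> bt_loss r d" "bt_loss r d \<le> 1 + R"
proof -
  obtain s a a' y where d: "d = (s, a, a', y)" by (cases d) auto
  have "\<bar>r s a - r s a'\<bar> \<le> R" "\<bar>r s a' - r s a\<bar> \<le> R" using assms[of s a] assms[of s a'] by auto
  then show "0 \<le> bt_loss r d" "bt_loss r d \<le> 1 + R"
    using neg_ln_sigmoid[of "r s a - r s a'"] neg_ln_sigmoid[of "r s a' - r s a"]
    by (auto simp: bt_loss_def d)
qed

context setting begin

definition dl :: "('s \<Rightarrow> 'a \<Rightarrow> real) \<Rightarrow> 's \<times> 'a \<times> 'a \<times> bool \<Rightarrow> real" where
  "dl r d = bt_loss r d - bt_loss rbar d"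

definition fexp :: "('s \<Rightarrow> 'a \<Rightarrow> real) \<Rightarrow> 's \<times> 'a \<times> 'a \<times> bool \<Rightarrow> real" where
  "fexp r d = exp (- dl r d / 2)"

lemma dl_bdd: "r \<in> Rs \<Longrightarrow> \<bar>dl r d\<bar> \<le> 1 + R"
proof -
  assume r: "r \<in> Rs"
  have "0 \<le> bt_loss r d" "bt_loss r d \<le> 1 + R"
    using bt_loss_bdd[where r=r and R=R and d=d] Rs_range[OF r] by auto
  moreover have "0 \<le> bt_loss rbar d" "bt_loss rbar d \<le> 1 + R"
    using bt_loss_bdd[where r=rbar and R=R and d=d] Rs_range[OF rbar_in] by auto
  ultimately show ?thesis unfolding dl_def by linarith
qed

lemma fexp_bdd: "r \<in> Rs \<Longrightarrow> \<bar>fexp r d\<bar> \<le> exp (1 + R)"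
proof -
  assume r: "r \<in> Rs"
  have "- dl r d / 2 \<le> 1 + R" using dl_bdd[OF r, of d] Rpos by (simp add: abs_le_iff)
  then show ?thesis by (simp add: fexp_def)
qed

definition Kst :: "(('s \<times> 'a \<times> 'a \<times> bool) list \<Rightarrow> ('s \<Rightarrow> 'a \<Rightarrow> real)) \<Rightarrow> ('s \<times> 'a \<times> 'a \<times> bool) list \<Rightarrow> ('s \<times> 'a \<times> 'a \<times> bool) pmf" where
  "Kst alg h = bind_pmf \<rho> (\<lambda>s. bind_pmf (pol_pmf (alg h) s) (\<lambda>a. bind_pmf (pol_pmf pref s) (\<lambda>a'.
      map_pmf (\<lambda>y. (s, a, a', y)) (bernoulli_pmf (sigmoid (rstar s a - rstar s a'))))))"

lemma gen_Suc: "gen_data \<rho> alg pref rstar (Suc n) = bind_pmf (gen_data \<rho> alg pref rstar n) (\<lambda>h. map_pmf (\<lambda>d. h @ [d]) (Kst alg h))"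
  by (simp add: Kst_def map_bind_pmf map_pmf_comp o_def)

lemma len_gen: "h \<in> set_pmf (gen_data \<rho> alg pref rstar n) \<Longrightarrow> length h = n"
  by (induction n arbitrary: h) (auto simp: gen_Suc)

lemma int_Kst:
  fixes f :: "'s \<times> 'a \<times> 'a \<times> bool \<Rightarrow> real"
  assumes pol: "\<And>h. is_policy A (alg h)" and bdd: "\<And>d. \<bar>f d\<bar> \<le> B"
  shows "measure_pmf.expectation (Kst alg h) f = measure_pmf.expectation \<rho> (\<lambda>s.
     \<Sum>a\<in>A. alg h s a * (\<Sum>a'\<in>A. pref s a' * (f (s,a,a',True) * sigmoid (rstar s a - rstar s a')
        + f (s,a,a',False) * (1 - sigmoid (rstar s a - rstar s a')))))"
proof -
  have "measure_pmf.expectation (Kst alg h) f = measure_pmf.expectation \<rho> (\<lambda>s.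
     measure_pmf.expectation (bind_pmf (pol_pmf (alg h) s) (\<lambda>a. bind_pmf (pol_pmf pref s) (\<lambda>a'.
      map_pmf (\<lambda>y. (s, a, a', y)) (bernoulli_pmf (sigmoid (rstar s a - rstar s a')))))) f)"
    unfolding Kst_def by (rule integral_bind_pmf_bdd[OF bdd])
  also have "\<dots> = measure_pmf.expectation \<rho> (\<lambda>s.
     \<Sum>a\<in>A. alg h s a * (\<Sum>a'\<in>A. pref s a' * (f (s,a,a',True) * sigmoid (rstar s a - rstar s a')
        + f (s,a,a',False) * (1 - sigmoid (rstar s a - rstar s a')))))"
  proof (intro Bochner_Integration.integral_cong refl)
    fix s
    show "measure_pmf.expectation (bind_pmf (pol_pmf (alg h) s) (\<lambda>a. bind_pmf (pol_pmf pref s) (\<lambda>a'.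
      map_pmf (\<lambda>y. (s, a, a', y)) (bernoulli_pmf (sigmoid (rstar s a - rstar s a')))))) f
      = (\<Sum>a\<in>A. alg h s a * (\<Sum>a'\<in>A. pref s a' * (f (s,a,a',True) * sigmoid (rstar s a - rstar s a')
        + f (s,a,a',False) * (1 - sigmoid (rstar s a - rstar s a')))))"
      apply (subst integral_bind_pmf_bdd[OF bdd])
      apply (subst int_pol_pmf[OF pol finA])
      apply (intro sum.cong refl arg_cong2[where f="(*)"])
      apply (subst integral_bind_pmf_bdd[OF bdd])
      apply (subst int_pol_pmf[OF pol_ref finA])
      apply (intro sum.cong refl arg_cong2[where f="(*)"])
      using sigmoid_pos sigmoid_lt1 by (simp add: less_imp_le)
  qed
  finally show ?thesis .
qed

end

lemma m_exp_le: fixes m :: real assumes "0 \<le> m" shows "exp (1 - m) * m \<le> 1"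
proof -
  have "m \<le> exp (m - 1)" using exp_ge_add_one_self[of "m - 1"] by simp
  then have "exp (1 - m) * m \<le> exp (1 - m) * exp (m - 1)" by (intro mult_left_mono) auto
  also have "\<dots> = 1" by (simp flip: exp_add)
  finally show ?thesis .
qed

context setting begin

definition mK :: "(('s \<times> 'a \<times> 'a \<times> bool) list \<Rightarrow> ('s \<Rightarrow> 'a \<Rightarrow> real)) \<Rightarrow> ('s \<Rightarrow> 'a \<Rightarrow> real) \<Rightarrow> ('s \<times> 'a \<times> 'a \<times> bool) list \<Rightarrow> real" where
  "mK alg r h = measure_pmf.expectation (Kst alg h) (fexp r)"

definition Wg :: "(('s \<times> 'a \<times> 'a \<times> bool) list \<Rightarrow> ('s \<Rightarrow> 'a \<Rightarrow> real)) \<Rightarrow> ('s \<Rightarrow> 'a \<Rightarrow> real) \<Rightarrow> ('s \<times> 'a \<times> 'a \<times> bool) list \<Rightarrow> real" where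
  "Wg alg r h = (\<Sum>i<length h. - dl r (h ! i) / 2 + 1 - mK alg r (take i h))"

lemma Wg_snoc: "Wg alg r (h @ [d]) = Wg alg r h + (- dl r d / 2 + 1 - mK alg r h)"
proof -
  have "Wg alg r (h @ [d]) = (\<Sum>i<Suc (length h). - dl r ((h @ [d]) ! i) / 2 + 1 - mK alg r (take i (h @ [d])))"
    by (simp add: Wg_def)
  also have "\<dots> = (\<Sum>i<length h. - dl r ((h @ [d]) ! i) / 2 + 1 - mK alg r (take i (h @ [d])))
      + (- dl r d / 2 + 1 - mK alg r h)"
    by (simp add: sum.lessThan_Suc)
  also have "(\<Sum>i<length h. - dl r ((h @ [d]) ! i) / 2 + 1 - mK alg r (take i (h @ [d]))) = Wg alg r h"
    unfolding Wg_def by (intro sum.cong refl) (simp add: nth_append)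
  finally show ?thesis .
qed

lemma fexp_nonneg: "0 \<le> fexp r d" by (simp add: fexp_def)

lemma fexp_int: "r \<in> Rs \<Longrightarrow> integrable (measure_pmf M) (fexp r)"
  by (intro measure_pmf.integrable_const_bound[where B="exp (1+R)"]) (auto simp: fexp_bdd)

lemma mK_nonneg: "0 \<le> mK alg r h" unfolding mK_def by (simp add: fexp_nonneg)

lemma nn_W: assumes r: "r \<in> Rs"
  shows "(\<integral>\<^sup>+h. ennreal (exp (Wg alg r h)) \<partial>measure_pmf (gen_data \<rho> alg pref rstar n)) \<le> 1"
proof (induction n)
  case 0
  then show ?case by (simp add: Wg_def)
next
  case (Suc n)
  let ?G = "gen_data \<rho> alg pref rstar n"
  have inner: "(\<integral>\<^sup>+d. ennreal (exp (Wg alg r (h @ [d]))) \<partial>measure_pmf (Kst alg h)) \<le> ennreal (exp (Wg alg r h))" for h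
  proof -
    define c where "c = exp (Wg alg r h + 1 - mK alg r h)"
    have c0: "0 \<le> c" by (simp add: c_def)
    have "(\<integral>\<^sup>+d. ennreal (exp (Wg alg r (h @ [d]))) \<partial>measure_pmf (Kst alg h))
        = (\<integral>\<^sup>+d. ennreal c * ennreal (fexp r d) \<partial>measure_pmf (Kst alg h))"
    proof (intro nn_integral_cong)
      fix d
      have "exp (Wg alg r (h @ [d])) = c * fexp r d"
        unfolding Wg_snoc c_def fexp_def exp_add[symmetric] by (simp add: algebra_simps)
      then show "ennreal (exp (Wg alg r (h @ [d]))) = ennreal c * ennreal (fexp r d)"
        using c0 fexp_nonneg[of r d] by (simp add: ennreal_mult)
    qed
    also have "\<dots> = ennreal c * (\<integral>\<^sup>+d. ennreal (fexp r d) \<partial>measure_pmf (Kst alg h))"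
      by (rule nn_integral_cmult) simp
    also have "(\<integral>\<^sup>+d. ennreal (fexp r d) \<partial>measure_pmf (Kst alg h)) = ennreal (mK alg r h)"
      unfolding mK_def by (rule nn_integral_eq_integral) (auto simp: fexp_int[OF r] fexp_nonneg)
    also have "ennreal c * ennreal (mK alg r h) = ennreal (c * mK alg r h)"
      using c0 mK_nonneg[of alg r h] by (simp add: ennreal_mult)
    also have "c * mK alg r h \<le> exp (Wg alg r h)"
    proof -
      have "c * mK alg r h = exp (Wg alg r h) * (exp (1 - mK alg r h) * mK alg r h)"
        by (simp add: c_def exp_add[symmetric] algebra_simps flip: exp_add)
      also have "\<dots> \<le> exp (Wg alg r h) * 1"
        by (intro mult_left_mono m_exp_le mK_nonneg) simp
      finally show ?thesis by simp
    qed
    finally show ?thesis by (simp add: ennreal_leI)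
  qed
  have "(\<integral>\<^sup>+h. ennreal (exp (Wg alg r h)) \<partial>measure_pmf (gen_data \<rho> alg pref rstar (Suc n)))
      = (\<integral>\<^sup>+h. (\<integral>\<^sup>+d. ennreal (exp (Wg alg r (h @ [d]))) \<partial>measure_pmf (Kst alg h)) \<partial>measure_pmf ?G)"
    by (simp only: gen_Suc nn_integral_bind_pmf nn_integral_map_pmf)
  also have "\<dots> \<le> (\<integral>\<^sup>+h. ennreal (exp (Wg alg r h)) \<partial>measure_pmf ?G)"
    by (intro nn_integral_mono inner)
  also have "\<dots> \<le> 1" by (rule Suc)
  finally show ?case .
qed

lemma Markov_W: assumes r: "r \<in> Rs" and c: "0 < c"
  shows "measure_pmf.prob (gen_data \<rho> alg pref rstar n) {h. c \<le> exp (Wg alg r h)} \<le> 1 / c"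
proof -
  let ?M = "measure_pmf (gen_data \<rho> alg pref rstar n)"
  have nn: "(\<integral>\<^sup>+h. ennreal (exp (Wg alg r h)) \<partial>?M) \<le> 1" by (rule nn_W[OF r])
  have int: "integrable ?M (\<lambda>h. exp (Wg alg r h))"
    by (rule integrableI_nonneg) (use nn in \<open>auto simp: top_unique order_le_less_trans\<close>)
  have "ennreal (measure_pmf.expectation (gen_data \<rho> alg pref rstar n) (\<lambda>h. exp (Wg alg r h)))
       = (\<integral>\<^sup>+h. ennreal (exp (Wg alg r h)) \<partial>?M)"
    by (rule nn_integral_eq_integral[symmetric]) (auto simp: int)
  then have I1: "measure_pmf.expectation (gen_data \<rho> alg pref rstar n) (\<lambda>h. exp (Wg alg r h)) \<le> 1"
    using nn by (metis ennreal_le_1)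
  have "measure ?M {h \<in> space ?M. c \<le> exp (Wg alg r h)} \<le> measure_pmf.expectation (gen_data \<rho> alg pref rstar n) (\<lambda>h. exp (Wg alg r h)) / c"
    by (rule integral_Markov_inequality_measure[where A=UNIV]) (auto simp: int c)
  also have "\<dots> \<le> 1 / c" using I1 c by (simp add: divide_right_mono)
  finally show ?thesis by simp
qed

end

lemma sqrt_exp_ln: "0 < p \<Longrightarrow> exp (ln p / 2) = sqrt p"
  by (metis exp_ln ln_sqrt real_sqrt_gt_zero less_imp_le)

lemma bc_term: assumes "0 < p" "0 < q"
  shows "q * exp ((ln p - ln q) / 2) = sqrt p * sqrt q"
proof -
  have "exp ((ln p - ln q) / 2) = exp (ln p / 2) / exp (ln q / 2)"
    by (simp add: exp_diff[symmetric] diff_divide_distrib)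
  also have "\<dots> = sqrt p / sqrt q" using assms by (simp add: sqrt_exp_ln)
  finally have e: "exp ((ln p - ln q) / 2) = sqrt p / sqrt q" .
  have "q * exp ((ln p - ln q) / 2) = (q / sqrt q) * sqrt p" unfolding e by simp
  also have "q / sqrt q = sqrt q" using assms by (simp add: real_div_sqrt)
  finally show ?thesis by (simp add: mult.commute)
qed

lemma hellinger_lb: assumes "\<bar>x\<bar> \<le> R" "\<bar>z\<bar> \<le> R"
  shows "exp (-2*R) / 64 * (x - z)^2 \<le> 1 - (sqrt (sigmoid x) * sqrt (sigmoid z) + sqrt (1 - sigmoid x) * sqrt (1 - sigmoid z))"
proof -
  have s: "exp (-R)/4 * \<bar>x - z\<bar> \<le> \<bar>sigmoid x - sigmoid z\<bar>" by (rule sigmoid_diff_lb[OF assms])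
  then have "(exp (-R)/4 * \<bar>x - z\<bar>)^2 \<le> \<bar>sigmoid x - sigmoid z\<bar>^2" by (intro power_mono) auto
  then have "exp (-2*R)/16 * (x - z)^2 \<le> (sigmoid x - sigmoid z)^2"
    by (simp add: power_mult_distrib power_divide exp_double[symmetric] power2_abs)
  moreover have "(sigmoid x - sigmoid z)^2 / 4 \<le> 1 - sqrt (sigmoid x) * sqrt (sigmoid z) - sqrt (1 - sigmoid x) * sqrt (1 - sigmoid z)"
    using sigmoid_pos sigmoid_lt1 by (intro bc_bound) (auto simp: less_imp_le)
  ultimately show ?thesis by simp
qed

context setting begin

definition Vfun :: "('s \<Rightarrow> 'a \<Rightarrow> real) \<Rightarrow> ('s \<Rightarrow> 'a \<Rightarrow> real) \<Rightarrow> 's \<Rightarrow> real" where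
  "Vfun p r s = (\<Sum>b\<in>A. \<Sum>c\<in>A. p s b * pref s c * ((rstar s b - r s b) - (rstar s c - r s c))^2)"

definition BC :: "real \<Rightarrow> real \<Rightarrow> real" where
  "BC x z = sqrt (sigmoid x) * sqrt (sigmoid z) + sqrt (1 - sigmoid x) * sqrt (1 - sigmoid z)"

lemma inner_BC: assumes a: "a \<in> A" and a': "a' \<in> A"
  shows "fexp r (s,a,a',True) * sigmoid (rstar s a - rstar s a') + fexp r (s,a,a',False) * (1 - sigmoid (rstar s a - rstar s a'))
     = BC (r s a - r s a') (rstar s a - rstar s a')"
proof -
  have zb: "rbar s a - rbar s a' = rstar s a - rstar s a'" using rbar_eq[OF a] rbar_eq[OF a'] by simp
  have zb': "rbar s a' - rbar s a = - (rstar s a - rstar s a')" using zb by simp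
  have x': "r s a' - r s a = - (r s a - r s a')" by simp
  define x where "x = r s a - r s a'"
  define z where "z = rstar s a - rstar s a'"
  have 1: "fexp r (s,a,a',True) * sigmoid z = sqrt (sigmoid x) * sqrt (sigmoid z)"
  proof -
    have "fexp r (s,a,a',True) = exp ((ln (sigmoid x) - ln (sigmoid z)) / 2)"
      unfolding fexp_def dl_def bt_loss_def using zb by (simp add: x_def z_def)
    then show ?thesis using bc_term[OF sigmoid_pos[of x] sigmoid_pos[of z]] by (simp add: mult.commute)
  qed
  have 2: "fexp r (s,a,a',False) * (1 - sigmoid z) = sqrt (1 - sigmoid x) * sqrt (1 - sigmoid z)"
  proof -
    have "fexp r (s,a,a',False) = exp ((ln (sigmoid (-x)) - ln (sigmoid (-z))) / 2)"
      unfolding fexp_def dl_def bt_loss_def using zb' x' by (simp add: x_def z_def)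
    then show ?thesis using bc_term[OF sigmoid_pos[of "-x"] sigmoid_pos[of "-z"]]
      by (simp add: sigmoid_neg mult.commute)
  qed
  show ?thesis using 1 2 by (simp add: BC_def x_def z_def)
qed

lemma BC_bounds: "0 \<le> BC x z" "BC x z \<le> 1"
proof -
  show "0 \<le> BC x z" unfolding BC_def using sigmoid_pos[of x] sigmoid_lt1[of x] sigmoid_pos[of z] sigmoid_lt1[of z]
    by (intro add_nonneg_nonneg mult_nonneg_nonneg) auto
  show "BC x z \<le> 1" using bc_bound[of "sigmoid x" "sigmoid z"] sigmoid_pos[of x] sigmoid_lt1[of x] sigmoid_pos[of z] sigmoid_lt1[of z]
    unfolding BC_def by (smt (verit) zero_le_power2 divide_nonneg_pos)
qed

lemma one_minus_mK:
  assumes pol: "\<And>h. is_policy A (alg h)" and r: "r \<in> Rs"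
  shows "exp (-2*R) / 64 * measure_pmf.expectation \<rho> (Vfun (alg h) r) \<le> 1 - mK alg r h"
proof -
  let ?p = "alg h"
  define Q where "Q s = (\<Sum>a\<in>A. ?p s a * (\<Sum>a'\<in>A. pref s a' * BC (r s a - r s a') (rstar s a - rstar s a')))" for s
  have mQ: "mK alg r h = measure_pmf.expectation \<rho> Q"
    unfolding mK_def Q_def
    by (subst int_Kst[OF pol, where B="exp (1+R)"]) (auto simp: fexp_bdd[OF r] inner_BC intro!: Bochner_Integration.integral_cong sum.cong)
  have sum1: "(\<Sum>a\<in>A. ?p s a * (\<Sum>a'\<in>A. pref s a' * 1)) = 1" for s
    using pol_sum[OF pol, of h s] ref_sum[of s] by simp
  have Qb: "0 \<le> Q s \<and> Q s \<le> 1" for s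
  proof -
    have "Q s \<le> (\<Sum>a\<in>A. ?p s a * (\<Sum>a'\<in>A. pref s a' * 1))" unfolding Q_def
      using pol_nonneg[OF pol] refpos BC_bounds by (intro sum_mono mult_left_mono) (auto intro: less_imp_le)
    moreover have "0 \<le> Q s" unfolding Q_def
      using pol_nonneg[OF pol] refpos BC_bounds by (intro sum_nonneg mult_nonneg_nonneg) (auto intro: less_imp_le)
    ultimately show ?thesis using sum1 by simp
  qed
  have pw: "exp (-2*R) / 64 * Vfun ?p r s \<le> 1 - Q s" for s
  proof -
    have "exp (-2*R) / 64 * Vfun ?p r s = (\<Sum>a\<in>A. ?p s a * (\<Sum>a'\<in>A. pref s a' * (exp (-2*R) / 64 * ((r s a - r s a') - (rstar s a - rstar s a'))^2)))"
      unfolding Vfun_def sum_distrib_left by (intro sum.cong refl) (simp add: algebra_simps power2_eq_square)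
    also have "\<dots> \<le> (\<Sum>a\<in>A. ?p s a * (\<Sum>a'\<in>A. pref s a' * (1 - BC (r s a - r s a') (rstar s a - rstar s a'))))"
    proof (intro sum_mono mult_left_mono)
      fix a a' assume a: "a \<in> A" and a': "a' \<in> A"
      have "\<bar>r s a - r s a'\<bar> \<le> R" using Rs_range[OF r, of s a] Rs_range[OF r, of s a'] by auto
      moreover have "\<bar>rstar s a - rstar s a'\<bar> \<le> R" using rrange[OF a, of s] rrange[OF a', of s] by auto
      ultimately show "exp (-2*R) / 64 * ((r s a - r s a') - (rstar s a - rstar s a'))^2 \<le> 1 - BC (r s a - r s a') (rstar s a - rstar s a')"
        unfolding BC_def by (rule hellinger_lb)
    qed (auto simp: pol_nonneg[OF pol] refpos less_imp_le)
    also have "\<dots> = (\<Sum>a\<in>A. ?p s a * (\<Sum>a'\<in>A. pref s a' * 1)) - Q s"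
      unfolding Q_def by (simp add: right_diff_distrib sum_subtractf)
    finally show ?thesis using sum1 by simp
  qed
  have Vb: "\<bar>Vfun ?p r s\<bar> \<le> 4 * R^2" for s
  proof -
    have "Vfun ?p r s \<le> (\<Sum>b\<in>A. \<Sum>c\<in>A. ?p s b * pref s c * (4 * R^2))" unfolding Vfun_def
    proof (intro sum_mono mult_left_mono)
      fix b c assume b: "b \<in> A" and c: "c \<in> A"
      have "\<bar>(rstar s b - r s b) - (rstar s c - r s c)\<bar> \<le> 2 * R"
        using Rs_range[OF r, of s b] Rs_range[OF r, of s c] rrange[OF b, of s] rrange[OF c, of s] by auto
      then have "((rstar s b - r s b) - (rstar s c - r s c))^2 \<le> (2*R)^2"
        by (metis abs_le_square_iff abs_of_nonneg Rpos less_imp_le mult_nonneg_nonneg zero_le_numeral)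
      then show "((rstar s b - r s b) - (rstar s c - r s c))^2 \<le> 4 * R^2" by (simp add: power_mult_distrib)
    qed (auto simp: pol_nonneg[OF pol] refpos less_imp_le)
    also have "\<dots> = 4 * R^2" using pol_sum[OF pol, of h s] ref_sum[of s]
      by (simp flip: sum_distrib_right sum_distrib_left)
    finally have "Vfun ?p r s \<le> 4 * R^2" .
    moreover have "0 \<le> Vfun ?p r s" unfolding Vfun_def
      using pol_nonneg[OF pol] refpos by (intro sum_nonneg mult_nonneg_nonneg) (auto intro: less_imp_le)
    ultimately show ?thesis by simp
  qed
  have "exp (-2*R) / 64 * measure_pmf.expectation \<rho> (Vfun ?p r) = measure_pmf.expectation \<rho> (\<lambda>s. exp (-2*R) / 64 * Vfun ?p r s)"
    by simp
  also have "\<dots> \<le> measure_pmf.expectation \<rho> (\<lambda>s. 1 - Q s)"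
  proof (intro integral_mono pw)
    show "integrable (measure_pmf \<rho>) (\<lambda>s. 1 - Q s)" by (rule int_bdd[where B=1]) (use Qb in auto)
    show "integrable (measure_pmf \<rho>) (\<lambda>s. exp (-2*R) / 64 * Vfun ?p r s)"
      by (intro integrable_mult_right int_bdd[where B="4 * R^2"] Vb)
  qed
  also have "\<dots> = 1 - measure_pmf.expectation \<rho> Q"
    by (subst Bochner_Integration.integral_diff) (auto intro: int_bdd[where B=1] simp: Qb)
  finally show ?thesis by (simp add: mQ)
qed

end

context setting begin

lemma Vfun_bdd: assumes pol: "is_policy A p" and r: "r \<in> Rs"
  shows "0 \<le> Vfun p r s" "Vfun p r s \<le> 4 * R^2"
proof -
  have "Vfun p r s \<le> (\<Sum>b\<in>A. \<Sum>c\<in>A. p s b * pref s c * (4 * R^2))" unfolding Vfun_def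
  proof (intro sum_mono mult_left_mono)
    fix b c assume b: "b \<in> A" and c: "c \<in> A"
    have "\<bar>(rstar s b - r s b) - (rstar s c - r s c)\<bar> \<le> 2 * R"
      using Rs_range[OF r, of s b] Rs_range[OF r, of s c] rrange[OF b, of s] rrange[OF c, of s] by auto
    then have "((rstar s b - r s b) - (rstar s c - r s c))^2 \<le> (2*R)^2"
      by (metis abs_le_square_iff abs_of_nonneg Rpos less_imp_le mult_nonneg_nonneg zero_le_numeral)
    then show "((rstar s b - r s b) - (rstar s c - r s c))^2 \<le> 4 * R^2" by (simp add: power_mult_distrib)
  qed (auto simp: pol_nonneg[OF pol] refpos less_imp_le)
  also have "\<dots> = 4 * R^2" using pol_sum[OF pol, of s] ref_sum[of s]
    by (simp flip: sum_distrib_right sum_distrib_left)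
  finally show "Vfun p r s \<le> 4 * R^2" .
  show "0 \<le> Vfun p r s" unfolding Vfun_def
    using pol_nonneg[OF pol] refpos by (intro sum_nonneg mult_nonneg_nonneg) (auto intro: less_imp_le)
qed

lemma Dfun_cover: assumes p: "p \<in> conv_pol P" and r0: "r0 \<in> Rs" and l: "0 < l"
  shows "Dfun r0 s \<le> l * (1 + 15 * exp (R/\<beta>) * KL_s A p mu s) + 3/(2*l) * Vfun p r0 s"
proof -
  have pol: "is_policy A p" by (rule conv_pol_policy[OF p])
  have "(\<Sum>a\<in>A. mu s a * (rstar s a - r0 s a)) - (\<Sum>a\<in>A. pref s a * (rstar s a - r0 s a))
      \<le> l * (1 + 15 * exp (R/\<beta>) * (\<Sum>a\<in>A. psi (p s a) (mu s a)))
        + 3/(2*l) * (\<Sum>b\<in>A. \<Sum>c\<in>A. p s b * pref s c * ((rstar s b - r0 s b) - (rstar s c - r0 s c))^2)"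
  proof (rule cover[where A=A and pi="p s" and mu="mu s" and nu="pref s" and E="exp (R/\<beta>)"])
    show "finite A" by (rule finA)
    show "\<And>a. a \<in> A \<Longrightarrow> 0 \<le> p s a" using pol_nonneg[OF pol] by simp
    show "(\<Sum>a\<in>A. p s a) = 1" by (rule pol_sum[OF pol])
    show "\<And>a. a \<in> A \<Longrightarrow> 0 < mu s a" by (rule mu_pos)
    show "(\<Sum>a\<in>A. mu s a) = 1" by (rule mu_sum)
    show "\<And>a. a \<in> A \<Longrightarrow> 0 < pref s a" by (rule refpos)
    show "(\<Sum>a\<in>A. pref s a) = 1" by (rule ref_sum)
    show "\<And>a. a \<in> A \<Longrightarrow> mu s a \<le> exp (R/\<beta>) * pref s a" by (rule mu_le)
    show "1 \<le> exp (R/\<beta>)" using Rpos bpos by simp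
    show "0 < l" by (rule l)
  qed
  moreover have "Dfun r0 s = (\<Sum>a\<in>A. mu s a * (rstar s a - r0 s a)) - (\<Sum>a\<in>A. pref s a * (rstar s a - r0 s a))"
    by (simp add: Dfun_def right_diff_distrib sum_subtractf)
  ultimately show ?thesis by (simp add: KL_psi[OF pol] Vfun_def)
qed

lemma KL_nonneg: "is_policy A p \<Longrightarrow> 0 \<le> KL_s A p mu s"
  by (simp add: KL_psi) (intro sum_nonneg psi_nonneg pol_nonneg mu_pos; simp)

lemma Dfun_bdd: "r0 \<in> Rs \<Longrightarrow> \<bar>Dfun r0 s\<bar> \<le> 4 * R"
proof -
  assume r0: "r0 \<in> Rs"
  have b1: "\<bar>\<Sum>a\<in>A. q s a * r0 s a\<bar> \<le> R" if "is_policy A q" for q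
    using rsum_bdd[OF that] Rs_range[OF r0] by blast
  have b2: "\<bar>\<Sum>a\<in>A. q s a * rstar s a\<bar> \<le> R" if "is_policy A q" for q
    using rsum_bounds[OF that, of s] by simp
  show ?thesis unfolding Dfun_def using b1[OF pol_mu] b1[OF pol_ref] b2[OF pol_mu] b2[OF pol_ref]
    by (smt (verit))
qed

lemma ED_bound: assumes p: "p \<in> conv_pol P" and r0: "r0 \<in> Rs" and l: "0 < l"
  shows "measure_pmf.expectation \<rho> (Dfun r0) \<le> l * (1 + 15 * exp (R/\<beta>) * measure_pmf.expectation \<rho> (\<lambda>s. KL_s A p mu s))
     + 3/(2*l) * measure_pmf.expectation \<rho> (Vfun p r0)"
proof -
  have pol: "is_policy A p" by (rule conv_pol_policy[OF p])
  have iK: "integrable (measure_pmf \<rho>) (\<lambda>s. KL_s A p mu s)" by (rule int_bdd) (rule KL_mu_bound[OF p])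
  have iV: "integrable (measure_pmf \<rho>) (Vfun p r0)"
    by (rule int_bdd[where B="4*R^2"]) (use Vfun_bdd[OF pol r0] in auto)
  have iD: "integrable (measure_pmf \<rho>) (Dfun r0)" by (rule int_bdd) (rule Dfun_bdd[OF r0])
  have "measure_pmf.expectation \<rho> (Dfun r0) \<le> measure_pmf.expectation \<rho> (\<lambda>s. l * (1 + 15 * exp (R/\<beta>) * KL_s A p mu s) + 3/(2*l) * Vfun p r0 s)"
    using iK iV iD by (intro integral_mono Dfun_cover[OF p r0 l]) auto
  also have "\<dots> = l * (1 + 15 * exp (R/\<beta>) * measure_pmf.expectation \<rho> (\<lambda>s. KL_s A p mu s))
     + 3/(2*l) * measure_pmf.expectation \<rho> (Vfun p r0)"
    using iK iV by (simp add: distrib_left Bochner_Integration.integral_add)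
  finally show ?thesis .
qed

end

lemma sq15: fixes x y z w :: real shows "(15 * x * y * z * w)^2 = 225 * x^2 * y^2 * z^2 * w^2"
  by (simp add: power_mult_distrib)

lemma sq_sqrt_mult: fixes t b :: real shows "0 \<le> t \<Longrightarrow> t * b^2 = (sqrt t * b)^2"
  by (simp add: power_mult_distrib)

context setting begin

lemma sum_dl: assumes "length h = T" "0 < T"
  shows "(\<Sum>t<T. dl r (h ! t)) = real T * (L_D h r - L_D h rbar)"
  using assms by (simp add: dl_def L_D_def sum_subtractf right_diff_distrib)

lemma good_h:
  fixes alg :: "('s \<times> 'a \<times> 'a \<times> bool) list \<Rightarrow> ('s \<Rightarrow> 'a \<Rightarrow> real)" and T :: nat and \<delta> Cc c0 pl :: real and k0 :: nat
  assumes alg: "\<And>h. alg h \<in> conv_pol P"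
    and \<delta>: "0 < \<delta>" and T: "1 \<le> T" and Cc: "0 \<le> Cc" and c0: "0 < c0"
    and pl1: "1 \<le> pl" and lnpl: "ln (real (card P) / \<delta>) \<le> pl"
    and Tb: "real T \<ge> 225 * c0^2 * Cc^2 * (kappa (exp (2 * R / \<beta>)))^2 * pl ^ (2*k0+2) / \<beta>^2"
    and len: "length h = T"
    and reg: "regret \<rho> A pref \<beta> rstar alg h \<le> c0 * Cc * sqrt (real T) * pl ^ k0"
    and conc: "\<forall>r\<in>Rs. exp (Wg alg r h) < real (card P) / \<delta>"
    and p: "p \<in> RPO_solutions \<rho> A pref \<beta> (conv_pol P) Rs h (1 / sqrt (real T))"
  shows "J_beta \<rho> A pref \<beta> rstar mu - J_beta \<rho> A pref \<beta> rstar p \<le> 98 * exp (2 * R) / sqrt (real T) * pl ^ (2*k0+2)"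
proof -
  define N where "N = real (card P)"
  define Tr where "Tr = real T"
  define \<eta> where "\<eta> = 1 / sqrt Tr"
  define a where "a = exp (-2*R) / 64"
  define l where "l = 3 * \<eta> / (4 * a)"
  define \<kappa> where "\<kappa> = kappa (exp (2*R/\<beta>))"
  define EE where "EE = exp (R/\<beta>)"
  let ?J = "J_beta \<rho> A pref \<beta> rstar"
  let ?E = "measure_pmf.expectation \<rho>"
  have Tr1: "1 \<le> Tr" using T by (simp add: Tr_def)
  have sT: "0 < sqrt Tr" using Tr1 by simp
  have eta: "0 < \<eta>" using sT by (simp add: \<eta>_def)
  have a0: "0 < a" by (simp add: a_def)
  have l0: "0 < l" using eta a0 by (simp add: l_def)
  have polalg: "\<And>h. is_policy A (alg h)" using alg conv_pol_policy by blast
  have e2: "1 < exp (2*R/\<beta>)" using Rpos bpos by simp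
  have kE: "EE \<le> \<kappa>"
  proof -
    have "EE \<le> exp (2*R/\<beta>)" unfolding EE_def using Rpos bpos by (simp add: divide_right_mono)
    also have "\<dots> \<le> \<kappa>" unfolding \<kappa>_def by (rule kappa_ge(2)[OF e2])
    finally show ?thesis .
  qed
  have EE0: "0 \<le> EE" by (simp add: EE_def)
  have pP: "p \<in> conv_pol P" and le_inf: "(INF r\<in>Rs. rpo_obj \<rho> A pref \<beta> (1 / sqrt Tr) h mu r) \<le> (INF r\<in>Rs. rpo_obj \<rho> A pref \<beta> (1 / sqrt Tr) h p r)"
    using p mu_conv by (auto simp: RPO_solutions_def Tr_def)
  obtain r0 where r0: "r0 \<in> Rs" and r0eq: "(INF r\<in>Rs. rpo_obj \<rho> A pref \<beta> (1 / sqrt Tr) h mu r) = rpo_obj \<rho> A pref \<beta> (1 / sqrt Tr) h mu r0"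
  proof -
    let ?S = "(\<lambda>r. rpo_obj \<rho> A pref \<beta> (1 / sqrt Tr) h mu r) ` Rs"
    have "Inf ?S = Min ?S" using fin_Rs by (intro cInf_eq_Min) auto
    moreover have "Min ?S \<in> ?S" using fin_Rs by (intro Min_in) auto
    ultimately show ?thesis using that by auto
  qed
  have "(INF r\<in>Rs. rpo_obj \<rho> A pref \<beta> (1 / sqrt Tr) h p r) \<le> rpo_obj \<rho> A pref \<beta> (1 / sqrt Tr) h p rbar"
    using fin_Rs rbar_in by (intro cINF_lower) (auto intro: bdd_below_finite)
  then have rle: "rpo_obj \<rho> A pref \<beta> \<eta> h mu r0 \<le> rpo_obj \<rho> A pref \<beta> \<eta> h p rbar"
    using le_inf r0eq by (simp add: \<eta>_def)
  define D0 where "D0 = L_D h r0 - L_D h rbar"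
  have sub: "?J mu - ?J p \<le> ?E (Dfun r0) - D0 / \<eta>"
    unfolding D0_def by (rule rpo_key[OF pP r0 rle])
  define KLt where "KLt t = ?E (\<lambda>s. KL_s A (alg (take t h)) mu s)" for t
  define Vt where "Vt t = ?E (Vfun (alg (take t h)) r0)" for t
  define SK where "SK = (\<Sum>t<T. KLt t)"
  define SV where "SV = (\<Sum>t<T. Vt t)"
  have "Tr * ?E (Dfun r0) = (\<Sum>t<T. ?E (Dfun r0))" by (simp add: Tr_def)
  also have "\<dots> \<le> (\<Sum>t<T. l * (1 + 15 * EE * KLt t) + 3/(2*l) * Vt t)"
    unfolding KLt_def Vt_def EE_def by (intro sum_mono ED_bound[OF alg r0 l0])
  also have "\<dots> = (\<Sum>t<T. l) + (15 * l * EE) * (\<Sum>t<T. KLt t) + 3/(2*l) * (\<Sum>t<T. Vt t)"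
    unfolding sum_distrib_left sum.distrib[symmetric] by (intro sum.cong refl) (simp add: algebra_simps)
  also have "\<dots> = Tr * l + 15 * l * EE * SK + 3/(2*l) * SV"
    by (simp add: SK_def SV_def Tr_def)
  finally have avg: "Tr * ?E (Dfun r0) \<le> Tr * l + 15 * l * EE * SK + 3/(2*l) * SV" .
  have regSK: "regret \<rho> A pref \<beta> rstar alg h = \<beta> * SK"
    unfolding regret_def len SK_def KLt_def using J_gap[OF alg] by (simp add: sum_distrib_left)
  have SK0: "0 \<le> SK" unfolding SK_def KLt_def
    by (intro sum_nonneg integral_nonneg_AE AE_pmfI KL_nonneg polalg)
  have SV0: "0 \<le> SV" unfolding SV_def Vt_def
    by (intro sum_nonneg integral_nonneg_AE AE_pmfI Vfun_bdd(1)[OF polalg r0])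
  have "\<beta> * SK \<le> c0 * Cc * sqrt Tr * pl ^ k0" using reg regSK by (simp add: Tr_def)
  have cov: "15 * EE * SK \<le> Tr"
  proof -
    have pk: "(pl ^ k0)^2 \<le> pl ^ (2*k0+2)"
    proof -
      have "(pl ^ k0)^2 = pl ^ (k0*2)" by (rule power_mult[symmetric])
      also have "\<dots> \<le> pl ^ (2*k0+2)" using pl1 by (intro power_increasing) auto
      finally show ?thesis .
    qed
    have X: "225 * c0^2 * Cc^2 * \<kappa>^2 * pl ^ (2*k0+2) \<le> Tr * \<beta>^2"
      using Tb bpos by (simp add: \<kappa>_def Tr_def pos_divide_le_eq)
    have nn: "0 \<le> 225 * c0^2 * Cc^2 * \<kappa>^2" by simp
    have "(15 * c0 * Cc * \<kappa> * pl ^ k0)^2 = 225 * c0^2 * Cc^2 * \<kappa>^2 * (pl ^ k0)^2"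
      by (rule sq15)
    also have "\<dots> \<le> 225 * c0^2 * Cc^2 * \<kappa>^2 * pl ^ (2*k0+2)"
      by (rule mult_left_mono[OF pk nn])
    also have "\<dots> \<le> Tr * \<beta>^2" by (rule X)
    also have "Tr * \<beta>^2 = (sqrt Tr * \<beta>)^2"
      by (rule sq_sqrt_mult) (use Tr1 in linarith)
    finally have "(15 * c0 * Cc * \<kappa> * pl ^ k0)^2 \<le> (sqrt Tr * \<beta>)^2" .
    moreover have "0 \<le> sqrt Tr * \<beta>" using bpos sT by simp
    ultimately have B: "15 * c0 * Cc * \<kappa> * pl ^ k0 \<le> sqrt Tr * \<beta>"
      by (rule power2_le_imp_le)
    have k0': "0 \<le> \<kappa>" using kE EE0 by linarith
    have s1: "EE * SK \<le> \<kappa> * SK" by (rule mult_right_mono[OF kE SK0])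
    have s2: "\<kappa> * (\<beta> * SK) \<le> \<kappa> * (c0 * Cc * sqrt Tr * pl ^ k0)"
      by (rule mult_left_mono[OF \<open>\<beta> * SK \<le> _\<close> k0'])
    have s3: "\<kappa> * (c0 * Cc * sqrt Tr * pl ^ k0) = sqrt Tr * (15 * c0 * Cc * \<kappa> * pl ^ k0) / 15"
      by (simp add: ac_simps)
    have s4: "sqrt Tr * (15 * c0 * Cc * \<kappa> * pl ^ k0) \<le> sqrt Tr * (sqrt Tr * \<beta>)"
      using B sT by (intro mult_left_mono) auto
    have s5: "sqrt Tr * (sqrt Tr * \<beta>) = Tr * \<beta>" using Tr1 by (simp add: mult.assoc[symmetric])
    have "\<beta> * (EE * SK) \<le> \<beta> * (\<kappa> * SK)" using s1 bpos by (intro mult_left_mono) auto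
    also have "\<beta> * (\<kappa> * SK) = \<kappa> * (\<beta> * SK)" by (simp add: ac_simps)
    also note s2
    also note s3
    finally have "\<beta> * (EE * SK) \<le> Tr * \<beta> / 15" using s4 s5 by linarith
    then have "\<beta> * (15 * EE * SK) \<le> \<beta> * Tr" by (simp add: ac_simps)
    then show ?thesis using bpos by (simp add: mult_le_cancel_left_pos)
  qed
  have Wlt: "Wg alg r0 h < ln (N / \<delta>)"
  proof -
    have "exp (Wg alg r0 h) < N / \<delta>" using conc r0 by (simp add: N_def)
    moreover have "0 < exp (Wg alg r0 h)" by simp
    ultimately have "0 < N / \<delta>" by linarith
    then have "ln (exp (Wg alg r0 h)) < ln (N / \<delta>)"
      using \<open>exp (Wg alg r0 h) < N / \<delta>\<close> by (subst ln_less_cancel_iff) auto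
    then show ?thesis by simp
  qed
  have mKb: "a * Vt t \<le> 1 - mK alg r0 (take t h)" for t
    unfolding a_def Vt_def by (rule one_minus_mK[OF polalg r0])
  have "a * SV = (\<Sum>t<T. a * Vt t)" by (simp add: SV_def sum_distrib_left)
  also have "\<dots> \<le> (\<Sum>t<T. 1 - mK alg r0 (take t h))" by (intro sum_mono mKb)
  also have "\<dots> = Wg alg r0 h + (\<Sum>t<T. dl r0 (h ! t)) / 2"
    unfolding Wg_def len by (simp add: sum.distrib sum_subtractf sum_divide_distrib)
  also have "(\<Sum>t<T. dl r0 (h ! t)) = Tr * D0"
    unfolding D0_def Tr_def by (rule sum_dl[OF len]) (use T in simp)
  finally have concD: "a * SV < ln (N / \<delta>) + Tr * D0 / 2" using Wlt by simp
  have l2: "3 / (2 * l) = 2 * a / \<eta>" using a0 eta by (simp add: l_def field_simps)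
  have ED: "?E (Dfun r0) \<le> l + l * (15 * EE * SK / Tr) + 2 * a / \<eta> * (SV / Tr)"
  proof -
    have "?E (Dfun r0) \<le> (Tr * l + 15 * l * EE * SK + 3/(2*l) * SV) / Tr"
      using avg Tr1 by (simp add: field_simps)
    also have "\<dots> = l + l * (15 * EE * SK / Tr) + 3/(2*l) * (SV / Tr)" using Tr1 by (simp add: field_simps)
    finally show ?thesis using l2 by simp
  qed
  have c1: "l * (15 * EE * SK / Tr) \<le> l" using cov Tr1 l0 by (simp add: mult_left_le divide_le_eq)
  have D0b: "D0 / \<eta> \<ge> 2 * a / \<eta> * (SV / Tr) - 2 * ln (N / \<delta>) / (Tr * \<eta>)"
  proof -
    have "2 * (a * SV) / Tr - 2 * ln (N / \<delta>) / Tr \<le> D0"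
      using concD Tr1 by (simp add: field_simps)
    then have "(2 * (a * SV) / Tr - 2 * ln (N / \<delta>) / Tr) / \<eta> \<le> D0 / \<eta>"
      using eta by (simp add: divide_right_mono)
    then show ?thesis using eta Tr1 by (simp add: field_simps)
  qed
  have "?J mu - ?J p \<le> 2 * l + 2 * ln (N / \<delta>) / (Tr * \<eta>)"
    using sub ED c1 D0b by linarith
  also have "2 * l = 96 * exp (2 * R) / sqrt Tr"
    using sT by (simp add: l_def a_def \<eta>_def field_simps exp_minus[symmetric] flip: exp_add)
  also have "2 * ln (N / \<delta>) / (Tr * \<eta>) = 2 * ln (N / \<delta>) / sqrt Tr"
    using Tr1 sT by (simp add: \<eta>_def field_simps)
  also have "96 * exp (2 * R) / sqrt Tr + 2 * ln (N / \<delta>) / sqrt Tr \<le> 98 * exp (2 * R) / sqrt Tr * pl ^ (2*k0+2)"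
  proof -
    have ex: "1 \<le> exp (2*R)" using Rpos by simp
    have pp: "pl \<le> pl ^ (2*k0+2)" using power_increasing[of 1 "2*k0+2" pl] pl1 by simp
    have q1: "exp (2*R) * 1 \<le> exp (2*R) * pl" using pl1 by (intro mult_left_mono) auto
    have q2: "1 * pl \<le> exp (2*R) * pl" using ex pl1 by (intro mult_right_mono) auto
    have "96 * exp (2 * R) + 2 * ln (N / \<delta>) \<le> 96 * exp (2*R) * pl + 2 * exp (2*R) * pl"
      using lnpl q1 q2 unfolding N_def by linarith
    also have "\<dots> = 98 * exp (2*R) * pl" by simp
    also have "\<dots> \<le> 98 * exp (2*R) * pl ^ (2*k0+2)" using pp by simp
    finally have "96 * exp (2 * R) + 2 * ln (N / \<delta>) \<le> 98 * exp (2*R) * pl ^ (2*k0+2)" .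
    then have "(96 * exp (2 * R) + 2 * ln (N / \<delta>)) / sqrt Tr \<le> 98 * exp (2*R) * pl ^ (2*k0+2) / sqrt Tr"
      using sT by (simp add: divide_right_mono)
    then show ?thesis by (simp add: add_divide_distrib)
  qed
  finally show ?thesis by (simp add: Tr_def)
qed

end

context setting begin

lemma main:
  fixes alg :: "('s \<times> 'a \<times> 'a \<times> bool) list \<Rightarrow> ('s \<Rightarrow> 'a \<Rightarrow> real)" and T :: nat and \<delta> Cc c0 :: real and k0 :: nat
  assumes alg: "\<And>h. alg h \<in> conv_pol P"
    and \<delta>: "0 < \<delta>" "\<delta> < 1" and T: "1 \<le> T" and Cc: "0 \<le> Cc" and c0: "0 < c0"
    and reg: "measure_pmf.prob (gen_data \<rho> alg pref rstar T)
          {h. regret \<rho> A pref \<beta> rstar alg h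
                \<le> c0 * Cc * sqrt (real T) * polylog_base (card P) T \<delta> ^ k0} \<ge> 1 - \<delta>"
    and Tb: "real T \<ge> 225 * c0^2 * Cc^2 * (kappa (exp (2 * R / \<beta>)))^2 * polylog_base (card P) T \<delta> ^ (2*k0+2) / \<beta>^2"
  shows "measure_pmf.prob (gen_data \<rho> alg pref rstar T)
          {h. \<forall>p \<in> RPO_solutions \<rho> A pref \<beta> (conv_pol P) (reward_class A pref \<beta> R P) h (1 / sqrt (real T)).
                J_beta \<rho> A pref \<beta> rstar (pi_star A pref \<beta> rstar) - J_beta \<rho> A pref \<beta> rstar p
                  \<le> 98 * exp (2 * R) / sqrt (real T) * polylog_base (card P) T \<delta> ^ (2*k0+2)} \<ge> 1 - 2 * \<delta>"
proof -
  define pl where "pl = polylog_base (card P) T \<delta>"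
  define N where "N = real (card P)"
  let ?G = "gen_data \<rho> alg pref rstar T"
  let ?M = "measure_pmf ?G"
  define target where "target = {h. \<forall>p \<in> RPO_solutions \<rho> A pref \<beta> (conv_pol P) (reward_class A pref \<beta> R P) h (1 / sqrt (real T)).
                J_beta \<rho> A pref \<beta> rstar (pi_star A pref \<beta> rstar) - J_beta \<rho> A pref \<beta> rstar p
                  \<le> 98 * exp (2 * R) / sqrt (real T) * pl ^ (2*k0+2)}"
  have cP: "0 < card P" using finP starP by (auto simp: card_gt_0_iff)
  then have N1: "1 \<le> N" by (simp add: N_def)
  have T1: "1 \<le> real T" using T by simp
  have big: "exp 1 \<le> exp 1 * N * real T / \<delta>"
  proof -
    have "1 \<le> N * real T" using N1 T1 by (metis mult_mono' one_le_mult_iff order.trans less_le_not_le zero_le_one mult_1_right mult_le_cancel_left1 order_refl)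
    also have "\<dots> \<le> N * real T / \<delta>" using \<delta> N1 T1 by (simp add: le_divide_eq)
    finally have "1 \<le> N * real T / \<delta>" .
    then have "exp 1 * 1 \<le> exp 1 * (N * real T / \<delta>)" by (intro mult_left_mono) auto
    then show ?thesis by simp
  qed
  have pl1: "1 \<le> pl" unfolding pl_def polylog_base_def N_def[symmetric]
    using big by (subst ln_ge_iff) (auto intro: order.strict_trans2[OF exp_gt_zero])
  have lnpl: "ln (N / \<delta>) \<le> pl" unfolding pl_def polylog_base_def N_def[symmetric]
  proof (rule ln_mono)
    show "0 < N / \<delta>" using N1 \<delta> by simp
    have "N / \<delta> * 1 \<le> N / \<delta> * (exp 1 * real T)"
    proof (rule mult_left_mono)
      have "1 * 1 \<le> exp 1 * real T" using T1 by (intro mult_mono) auto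
      then show "1 \<le> exp 1 * real T" by simp
    qed (use N1 \<delta> in simp)
    then show "N / \<delta> \<le> exp 1 * N * real T / \<delta>" by (simp add: field_simps)
  qed
  define Ereg where "Ereg = {h. regret \<rho> A pref \<beta> rstar alg h \<le> c0 * Cc * sqrt (real T) * pl ^ k0}"
  define Ecc where "Ecc = {h. \<forall>r\<in>Rs. exp (Wg alg r h) < N / \<delta>}"
  define Good where "Good = Ereg \<inter> Ecc \<inter> set_pmf ?G"
  have sub: "Good \<subseteq> target"
  proof
    fix h assume h: "h \<in> Good"
    have len: "length h = T" using h len_gen by (auto simp: Good_def)
    show "h \<in> target" unfolding target_def
    proof (intro CollectI ballI)
      fix p assume p: "p \<in> RPO_solutions \<rho> A pref \<beta> (conv_pol P) (reward_class A pref \<beta> R P) h (1 / sqrt (real T))"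
      show "J_beta \<rho> A pref \<beta> rstar mu - J_beta \<rho> A pref \<beta> rstar p \<le> 98 * exp (2 * R) / sqrt (real T) * pl ^ (2*k0+2)"
        by (rule good_h[OF alg \<delta>(1) T Cc c0 pl1 lnpl[unfolded N_def] Tb[folded pl_def] len _ _ p])
          (use h in \<open>auto simp: Good_def Ereg_def Ecc_def N_def\<close>)
    qed
  qed
  have p1: "measure ?M (UNIV - Ereg) \<le> \<delta>"
    using measure_pmf.prob_compl[of "Ereg" ?G] reg by (simp add: Ereg_def pl_def)
  have p2: "measure ?M (UNIV - Ecc) \<le> \<delta>"
  proof -
    have "UNIV - Ecc = (\<Union>r\<in>Rs. {h. N / \<delta> \<le> exp (Wg alg r h)})" by (auto simp: Ecc_def not_less)
    then have "measure ?M (UNIV - Ecc) = measure ?M (\<Union>r\<in>Rs. {h. N / \<delta> \<le> exp (Wg alg r h)})" by simp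
    also have "\<dots> \<le> (\<Sum>r\<in>Rs. measure ?M {h. N / \<delta> \<le> exp (Wg alg r h)})"
      using fin_Rs by (intro measure_pmf.finite_measure_subadditive_finite) auto
    also have "\<dots> \<le> (\<Sum>r\<in>Rs. 1 / (N / \<delta>))"
      using N1 \<delta> by (intro sum_mono Markov_W) auto
    also have "\<dots> = real (card Rs) * (\<delta> / N)" by simp
    also have "\<dots> \<le> N * (\<delta> / N)" using fin_Rs N1 \<delta> by (intro mult_right_mono) (auto simp: N_def)
    also have "\<dots> = \<delta>" using N1 by simp
    finally show ?thesis .
  qed
  have p3: "measure ?M (UNIV - set_pmf ?G) = 0" by (simp add: measure_pmf_zero_iff)
  have "measure ?M (UNIV - Good) \<le> measure ?M ((UNIV - Ereg) \<union> (UNIV - Ecc) \<union> (UNIV - set_pmf ?G))"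
    by (intro measure_pmf.finite_measure_mono) (auto simp: Good_def)
  also have "\<dots> \<le> measure ?M ((UNIV - Ereg) \<union> (UNIV - Ecc)) + measure ?M (UNIV - set_pmf ?G)"
    by (rule measure_Un_le) auto
  also have "\<dots> \<le> measure ?M (UNIV - Ereg) + measure ?M (UNIV - Ecc) + measure ?M (UNIV - set_pmf ?G)"
    using measure_Un_le[of "UNIV - Ereg" ?M "UNIV - Ecc"] by simp
  finally have "measure ?M (UNIV - Good) \<le> 2 * \<delta>" using p1 p2 p3 by simp
  moreover have "measure ?M (UNIV - Good) = 1 - measure ?M Good"
    using measure_pmf.prob_compl[of Good ?G] by simp
  ultimately have "1 - 2 * \<delta> \<le> measure ?M Good" by simp
  also have "\<dots> \<le> measure ?M target" by (intro measure_pmf.finite_measure_mono sub) auto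
  finally show ?thesis by (simp add: target_def pl_def)
qed

end

theorem corollaryE6:
  shows "\<forall>c0>0. \<forall>k0::nat. \<exists>c1>0. \<exists>c2>0. \<exists>k::nat.
    \<exists>etaf :: nat \<Rightarrow> real \<Rightarrow> real \<Rightarrow> nat \<Rightarrow> real \<Rightarrow> real \<Rightarrow> real.
    \<forall>(A :: 'a set) (\<rho> :: 's pmf) (pref :: 's \<Rightarrow> 'a \<Rightarrow> real) (\<beta>::real) (R::real)
      (rstar :: 's \<Rightarrow> 'a \<Rightarrow> real) (P :: ('s \<Rightarrow> 'a \<Rightarrow> real) set)
      (alg :: ('s \<times> 'a \<times> 'a \<times> bool) list \<Rightarrow> ('s \<Rightarrow> 'a \<Rightarrow> real)) (T::nat) (\<delta>::real) (Cc::real).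
      finite A \<and> A \<noteq> {} \<and> is_policy A pref \<and> (\<forall>s. \<forall>a\<in>A. 0 < pref s a)
      \<and> 0 < \<beta> \<and> 0 < R \<and> (\<forall>s. \<forall>a\<in>A. 0 \<le> rstar s a \<and> rstar s a \<le> R)
      \<and> finite P \<and> (\<forall>p\<in>P. is_policy A p)
      \<and> pi_star A pref \<beta> rstar \<in> P
      \<and> (\<forall>p\<in>P. \<forall>s. \<forall>a\<in>A. \<bar>ln (p s a / pref s a)\<bar> \<le> R / \<beta>)
      \<and> (\<forall>h. alg h \<in> conv_pol P)
      \<and> 0 < \<delta> \<and> \<delta> < 1 \<and> 1 \<le> T \<and> 0 \<le> Cc
      \<and> measure_pmf.prob (gen_data \<rho> alg pref rstar T)
          {h. regret \<rho> A pref \<beta> rstar alg h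
                \<le> c0 * Cc * sqrt (real T) * polylog_base (card P) T \<delta> ^ k0} \<ge> 1 - \<delta>
      \<and> real T \<ge> c1 * Cc^2 * (kappa (exp (2 * R / \<beta>)))^2 * polylog_base (card P) T \<delta> ^ k / \<beta>^2
      \<longrightarrow> measure_pmf.prob (gen_data \<rho> alg pref rstar T)
          {h. \<forall>p \<in> RPO_solutions \<rho> A pref \<beta> (conv_pol P) (reward_class A pref \<beta> R P) h
                       (etaf T \<beta> R (card P) \<delta> Cc).
                J_beta \<rho> A pref \<beta> rstar (pi_star A pref \<beta> rstar) - J_beta \<rho> A pref \<beta> rstar p
                  \<le> c2 * exp (2 * R) / sqrt (real T) * polylog_base (card P) T \<delta> ^ k} \<ge> 1 - 2 * \<delta>"
  apply (intro allI impI)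
  subgoal for c0 k0
    apply (rule exI[where x="225 * c0^2"])
    apply (rule conjI)
     apply simp
    apply (rule exI[where x="98"])
    apply (rule conjI)
     apply simp
    apply (rule exI[where x="2 * k0 + 2"])
    apply (rule exI[where x="\<lambda>T \<beta> R N \<delta> Cc. 1 / sqrt (real T)"])
    apply (intro allI impI)
    apply (elim conjE)
    subgoal premises prems for A \<rho> pref \<beta> R rstar P alg T \<delta> Cc
    proof -
      interpret setting A \<rho> pref \<beta> R rstar P
        by unfold_locales (use prems in auto)
      show ?thesis
        by (rule main) (use prems in auto)
    qed
    done
  done

end
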